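(* Let $E$ be a nonzero reflexive real Banach space, let $f,g\colon E\times E^*\to\,]{-}\infty,\infty]$ be proper convex lower semicontinuous BC--functions such that $\bigcup_{\lambda>0}\lambda[\pi_1\mathrm{dom}\,f-\pi_1\mathrm{dom}\,g]$ is a closed linear subspace of $E$, and for $(x,x^* )\in E\times E^*$ let $h(x,x^* ):=\inf\{f(x,s^* )+g(x,t^* )\colon s^*,t^*\in E^*,\ s^*+t^*=x^*\}$. Then $h$ is a BC--function, ${\cal P}_q(h^@)=\{(x,s^*+t^* )\colon (x,s^* )\in{\cal P}_q(f^@),\ (x,t^* )\in{\cal P}_q(g^@)\}$, and ${\cal P}_q(h)=\{(x,s^*+t^* )\colon (x,s^* )\in{\cal P}_q(f),\ (x,t^* )\in{\cal P}_q(g)\}$.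
   Context: $\pi_1(x,x^* ):=x$; $\mathrm{dom}\,f:=\{(x,x^* )\colon f(x,x^* )\in\mathbb{R}\}$. On $E\times E^*$ set $\lfloor(x,x^* ),(y,y^* )\rfloor:=\langle x,y^*\rangle+\langle y,x^*\rangle$ and $q(x,x^* ):=\langle x,x^*\rangle$. For a function $k$ on $E\times E^*$, $k^@(y,y^* ):=\sup_{(x,x^* )}[\lfloor(x,x^* ),(y,y^* )\rfloor-k(x,x^* )]$; a BC--function is a proper convex $k$ with $k^@\ge k\ge q$ on $E\times E^*$; for $k\ge q$, ${\cal P}_q(k):=\{(x,x^* )\colon k(x,x^* )=\langle x,x^*\rangle\}$. *)

theory Defs
  imports "HOL-Analysis.Analysis"
begin

(* E is a type of class banach; E* is the type of bounded linear functionals;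
   functions into ]-inf,inf] are ereal-valued. *)

definition reflexive_space :: "'a::banach itself \<Rightarrow> bool" where
  "reflexive_space _ \<longleftrightarrow>
     (\<forall>\<Phi> :: ('a \<Rightarrow>\<^sub>L real) \<Rightarrow>\<^sub>L real. \<exists>x::'a. \<forall>xs. blinfun_apply \<Phi> xs = blinfun_apply xs x)"

definition proper_fun :: "('b \<Rightarrow> ereal) \<Rightarrow> bool" where
  "proper_fun k \<longleftrightarrow> (\<forall>z. k z \<noteq> -\<infinity>) \<and> (\<exists>z. k z \<noteq> \<infinity>)"

definition convex_fun :: "('b::real_vector \<Rightarrow> ereal) \<Rightarrow> bool" where
  "convex_fun k \<longleftrightarrow> (\<forall>z w t. 0 < t \<longrightarrow> t < 1 \<longrightarrow>
      k ((1 - t) *\<^sub>R z + t *\<^sub>R w) \<le> ereal (1 - t) * k z + ereal t * k w)"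

definition lsc_fun :: "('b::topological_space \<Rightarrow> ereal) \<Rightarrow> bool" where
  "lsc_fun k \<longleftrightarrow> (\<forall>c::real. closed {z. k z \<le> ereal c})"

definition qform :: "'a::banach \<times> ('a \<Rightarrow>\<^sub>L real) \<Rightarrow> real" where
  "qform p = blinfun_apply (snd p) (fst p)"

definition bpair :: "'a::banach \<times> ('a \<Rightarrow>\<^sub>L real) \<Rightarrow> 'a \<times> ('a \<Rightarrow>\<^sub>L real) \<Rightarrow> real" where
  "bpair p r = blinfun_apply (snd r) (fst p) + blinfun_apply (snd p) (fst r)"

definition fconj :: "('a::banach \<times> ('a \<Rightarrow>\<^sub>L real) \<Rightarrow> ereal) \<Rightarrow> 'a \<times> ('a \<Rightarrow>\<^sub>L real) \<Rightarrow> ereal" where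
  "fconj k r = (SUP p. ereal (bpair p r) - k p)"

definition BC_fun :: "('a::banach \<times> ('a \<Rightarrow>\<^sub>L real) \<Rightarrow> ereal) \<Rightarrow> bool" where
  "BC_fun k \<longleftrightarrow> proper_fun k \<and> convex_fun k \<and>
     (\<forall>p. fconj k p \<ge> k p \<and> k p \<ge> ereal (qform p))"

definition Pq :: "('a::banach \<times> ('a \<Rightarrow>\<^sub>L real) \<Rightarrow> ereal) \<Rightarrow> ('a \<times> ('a \<Rightarrow>\<^sub>L real)) set" where
  "Pq k = {p. k p = ereal (qform p)}"

definition fdom :: "('b \<Rightarrow> ereal) \<Rightarrow> 'b set" where
  "fdom k = {p. k p \<noteq> \<infinity> \<and> k p \<noteq> -\<infinity>}"

end

theory Submission
  imports Defs
begin

definition lingraph :: "('a::real_vector \<Rightarrow> real) \<Rightarrow> ('a \<times> real) set \<Rightarrow> bool" where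
  "lingraph p G \<longleftrightarrow> G \<noteq> {} \<and>
     (\<forall>x a y b. (x,a) \<in> G \<longrightarrow> (y,b) \<in> G \<longrightarrow> (x+y, a+b) \<in> G) \<and>
     (\<forall>x a c. (x,a) \<in> G \<longrightarrow> (c *\<^sub>R x, c * a) \<in> G) \<and>
     (\<forall>x a b. (x,a) \<in> G \<longrightarrow> (x,b) \<in> G \<longrightarrow> a = b) \<and>
     (\<forall>x a. (x,a) \<in> G \<longrightarrow> a \<le> p x)"

lemma hahn_banach_sublinear:
  fixes p :: "'a::real_vector \<Rightarrow> real"
  assumes sub: "\<And>x y. p (x + y) \<le> p x + p y"
      and hom: "\<And>c x. c \<ge> 0 \<Longrightarrow> p (c *\<^sub>R x) = c * p x"
  shows "\<exists>u. linear u \<and> (\<forall>x. u x \<le> p x)"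
proof -
  define A where "A = {G. lingraph p G}"
  have p0: "p 0 = 0" using hom[of 0 0] by simp
  have "\<exists>M\<in>A. \<forall>X\<in>A. M \<subseteq> X \<longrightarrow> X = M"
  proof (rule Zorn_Lemma2, intro ballI)
    fix C assume C: "C \<in> chains A"
    show "\<exists>U\<in>A. \<forall>X\<in>C. X \<subseteq> U"
    proof (cases "C = {}")
      case True
      have "{(0,0)} \<in> A" using p0 by (auto simp: A_def lingraph_def)
      then show ?thesis using True by blast
    next
      case False
      have CA: "C \<subseteq> A" and ch: "\<And>X Y. X \<in> C \<Longrightarrow> Y \<in> C \<Longrightarrow> X \<subseteq> Y \<or> Y \<subseteq> X"
        using C by (auto simp: chains_def chain_subset_def)
      have two: "\<And>u v. u \<in> \<Union>C \<Longrightarrow> v \<in> \<Union>C \<Longrightarrow> \<exists>G\<in>C. u \<in> G \<and> v \<in> G"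
        using ch by blast
      have "\<Union>C \<in> A"
        unfolding A_def mem_Collect_eq lingraph_def
      proof (intro conjI allI impI)
        obtain G where "G \<in> C" using False by blast
        then have "G \<noteq> {}" using CA by (auto simp: A_def lingraph_def)
        then show "\<Union>C \<noteq> {}" using \<open>G \<in> C\<close> by blast
      next
        fix x a y b assume "(x,a) \<in> \<Union>C" "(y,b) \<in> \<Union>C"
        then obtain G where G: "G \<in> C" "(x,a) \<in> G" "(y,b) \<in> G" using two by blast
        then have "lingraph p G" using CA by (auto simp: A_def)
        then have "(x+y, a+b) \<in> G" using G unfolding lingraph_def by blast
        then show "(x+y, a+b) \<in> \<Union>C" using G by blast
      next
        fix x a c assume "(x,a) \<in> \<Union>C"
        then obtain G where G: "G \<in> C" "(x,a) \<in> G" by blast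
        then have "lingraph p G" using CA by (auto simp: A_def)
        then have "(c *\<^sub>R x, c * a) \<in> G" using G unfolding lingraph_def by blast
        then show "(c *\<^sub>R x, c * a) \<in> \<Union>C" using G by blast
      next
        fix x a b assume "(x,a) \<in> \<Union>C" "(x,b) \<in> \<Union>C"
        then obtain G where "G \<in> C" "(x,a) \<in> G" "(x,b) \<in> G" using two by blast
        then show "a = b" using CA by (auto simp: A_def lingraph_def)
      next
        fix x a assume "(x,a) \<in> \<Union>C"
        then obtain G where "G \<in> C" "(x,a) \<in> G" by blast
        then show "a \<le> p x" using CA by (auto simp: A_def lingraph_def)
      qed
      then show ?thesis by blast
    qed
  qed
  then obtain M where MA: "M \<in> A" and Mmax: "\<And>X. X \<in> A \<Longrightarrow> M \<subseteq> X \<Longrightarrow> X = M" by blast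
  have Mne: "M \<noteq> {}"
    and Madd: "\<And>x a y b. (x,a) \<in> M \<Longrightarrow> (y,b) \<in> M \<Longrightarrow> (x+y, a+b) \<in> M"
    and Msc: "\<And>x a c. (x,a) \<in> M \<Longrightarrow> (c *\<^sub>R x, c * a) \<in> M"
    and Mfun: "\<And>x a b. (x,a) \<in> M \<Longrightarrow> (x,b) \<in> M \<Longrightarrow> a = b"
    and Mp: "\<And>x a. (x,a) \<in> M \<Longrightarrow> a \<le> p x"
    using MA by (auto simp: A_def lingraph_def)
  have M00: "(0,0) \<in> M"
  proof -
    obtain x a where "(x,a) \<in> M" using Mne by auto
    from Msc[OF this, of 0] show ?thesis by simp
  qed
  have total: "\<forall>x. \<exists>a. (x,a) \<in> M"
  proof (rule ccontr)
    assume "\<not> ?thesis"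
    then obtain x0 where x0: "\<And>a. (x0,a) \<notin> M" by auto
    define S where "S = {a - p (x - x0) | x a. (x,a) \<in> M}"
    have Sne: "S \<noteq> {}" using M00 by (auto simp: S_def)
    have Sbd: "\<And>s y b. s \<in> S \<Longrightarrow> (y,b) \<in> M \<Longrightarrow> s \<le> p (y + x0) - b"
    proof -
      fix s y b assume "s \<in> S" "(y,b) \<in> M"
      then obtain x a where s: "s = a - p (x - x0)" "(x,a) \<in> M" by (auto simp: S_def)
      have "a + b \<le> p (x + y)" using Mp[OF Madd[OF s(2) \<open>(y,b) \<in> M\<close>]] .
      also have "x + y = (x - x0) + (y + x0)" by simp
      also have "p \<dots> \<le> p (x - x0) + p (y + x0)" by (rule sub)
      finally show "s \<le> p (y + x0) - b" using s by simp
    qed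
    define \<alpha> where "\<alpha> = Sup S"
    have bdd: "bdd_above S" using Sbd[OF _ M00] by (intro bdd_aboveI[where M="p (0 + x0) - 0"]) auto
    have al1: "\<And>x a. (x,a) \<in> M \<Longrightarrow> a - p (x - x0) \<le> \<alpha>"
      unfolding \<alpha>_def by (rule cSup_upper[OF _ bdd]) (auto simp: S_def)
    have al2: "\<And>y b. (y,b) \<in> M \<Longrightarrow> \<alpha> \<le> p (y + x0) - b"
      unfolding \<alpha>_def by (rule cSup_least[OF Sne]) (rule Sbd)
    define M' where "M' = {(x + t *\<^sub>R x0, a + t * \<alpha>) | x a t. (x,a) \<in> M}"
    have dom0: "\<And>x a x' a' t t'. (x,a) \<in> M \<Longrightarrow> (x',a') \<in> M \<Longrightarrow> x + t *\<^sub>R x0 = x' + t' *\<^sub>R x0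
         \<Longrightarrow> t = t' \<and> x = x' \<and> a = a'"
    proof -
      fix x a x' a' t t' assume xa: "(x,a) \<in> M" and xa': "(x',a') \<in> M" and eq: "x + t *\<^sub>R x0 = x' + t' *\<^sub>R x0"
      have tt: "t = t'"
      proof (rule ccontr)
        assume "t \<noteq> t'"
        have d: "(x + (-1) *\<^sub>R x', a + (-1) * a') \<in> M" using Madd[OF xa Msc[OF xa']] .
        have "(inverse (t' - t) *\<^sub>R (x + (-1) *\<^sub>R x'), inverse (t' - t) * (a + (-1) * a')) \<in> M"
          using Msc[OF d] .
        moreover have "inverse (t' - t) *\<^sub>R (x + (-1) *\<^sub>R x') = x0"
        proof -
          have "x + (-1) *\<^sub>R x' = (t' - t) *\<^sub>R x0" using eq by (simp add: algebra_simps)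
          then show ?thesis using \<open>t \<noteq> t'\<close> by simp
        qed
        ultimately show False using x0 by metis
      qed
      then have "x = x'" using eq by simp
      then show "t = t' \<and> x = x' \<and> a = a'" using tt Mfun xa xa' by blast
    qed
    have M'I: "\<And>x a t. (x,a) \<in> M \<Longrightarrow> (x + t *\<^sub>R x0, a + t * \<alpha>) \<in> M'"
      unfolding M'_def by blast
    have M'E: "\<And>x a. (x,a) \<in> M' \<Longrightarrow> \<exists>x1 a1 t. (x1,a1) \<in> M \<and> x = x1 + t *\<^sub>R x0 \<and> a = a1 + t * \<alpha>"
      unfolding M'_def by blast
    have M'A: "M' \<in> A"
      unfolding A_def mem_Collect_eq lingraph_def
    proof (intro conjI allI impI)
      show "M' \<noteq> {}" using M'I[OF M00, of 0] by blast
    next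
      fix x a y b assume h1: "(x,a) \<in> M'" and h2: "(y,b) \<in> M'"
      obtain x1 a1 t1 x2 a2 t2 where "(x1,a1) \<in> M" "(x2,a2) \<in> M"
        "x = x1 + t1 *\<^sub>R x0" "a = a1 + t1 * \<alpha>" "y = x2 + t2 *\<^sub>R x0" "b = a2 + t2 * \<alpha>"
        using M'E[OF h1] M'E[OF h2] by blast
      moreover have "x + y = (x1 + x2) + (t1 + t2) *\<^sub>R x0" "a + b = (a1 + a2) + (t1 + t2) * \<alpha>"
        using calculation by (simp_all add: algebra_simps)
      ultimately show "(x+y, a+b) \<in> M'" unfolding M'_def using Madd by blast
    next
      fix x a c assume "(x,a) \<in> M'"
      then obtain x1 a1 t1 where "(x1,a1) \<in> M" "x = x1 + t1 *\<^sub>R x0" "a = a1 + t1 * \<alpha>"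
        using M'E by blast
      moreover have "c *\<^sub>R x = c *\<^sub>R x1 + (c * t1) *\<^sub>R x0" "c * a = c * a1 + (c * t1) * \<alpha>"
        using calculation by (simp_all add: algebra_simps)
      ultimately show "(c *\<^sub>R x, c * a) \<in> M'" unfolding M'_def using Msc by blast
    next
      fix x a b assume h1: "(x,a) \<in> M'" and h2: "(x,b) \<in> M'"
      obtain x1 a1 t1 x2 a2 t2 where "(x1,a1) \<in> M" "(x2,a2) \<in> M"
        "x = x1 + t1 *\<^sub>R x0" "a = a1 + t1 * \<alpha>" "x = x2 + t2 *\<^sub>R x0" "b = a2 + t2 * \<alpha>"
        using M'E[OF h1] M'E[OF h2] by blast
      then show "a = b" using dom0 by metis
    next
      fix x a assume "(x,a) \<in> M'"
      then obtain x1 a1 t where xa1: "(x1,a1) \<in> M" and xe: "x = x1 + t *\<^sub>R x0" and ae: "a = a1 + t * \<alpha>"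
        using M'E by blast
      consider "t = 0" | "t > 0" | "t < 0" by linarith
      then show "a \<le> p x"
      proof cases
        case 1 then show ?thesis using Mp[OF xa1] xe ae by simp
      next
        case 2
        have "\<alpha> \<le> p (inverse t *\<^sub>R x1 + x0) - inverse t * a1" using al2[OF Msc[OF xa1]] .
        then have "t * \<alpha> \<le> t * (p (inverse t *\<^sub>R x1 + x0) - inverse t * a1)"
          using 2 by (simp add: mult_left_mono)
        also have "\<dots> = p (t *\<^sub>R (inverse t *\<^sub>R x1 + x0)) - a1"
          using 2 by (simp add: hom right_diff_distrib)
        also have "t *\<^sub>R (inverse t *\<^sub>R x1 + x0) = x" using 2 xe by (simp add: scaleR_add_right)
        finally show ?thesis using ae by simp
      next
        case 3
        define s where "s = - t"
        have s: "s > 0" using 3 by (simp add: s_def)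
        have "inverse s * a1 - p (inverse s *\<^sub>R x1 - x0) \<le> \<alpha>" using al1[OF Msc[OF xa1]] .
        then have "s * (inverse s * a1 - p (inverse s *\<^sub>R x1 - x0)) \<le> s * \<alpha>"
          using s by (simp add: mult_left_mono)
        also have "s * (inverse s * a1 - p (inverse s *\<^sub>R x1 - x0)) = a1 - p (s *\<^sub>R (inverse s *\<^sub>R x1 - x0))"
          using s by (simp add: hom right_diff_distrib)
        also have "s *\<^sub>R (inverse s *\<^sub>R x1 - x0) = x" using s xe by (simp add: s_def scaleR_diff_right)
        finally show ?thesis using ae by (simp add: s_def)
      qed
    qed
    have "M \<subseteq> M'"
    proof
      fix z assume "z \<in> M"
      then obtain x a where "z = (x,a)" "(x,a) \<in> M" by (cases z) auto
      then show "z \<in> M'" using M'I[of x a 0] by simp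
    qed
    moreover have "(x0, \<alpha>) \<in> M'" using M'I[OF M00, of 1] by simp
    ultimately show False using Mmax[OF M'A] x0 by blast
  qed
  define u where "u x = (THE a. (x,a) \<in> M)" for x
  have uM: "(x, u x) \<in> M" for x
  proof -
    obtain a where "(x,a) \<in> M" using total by blast
    then show ?thesis unfolding u_def by (rule theI) (use Mfun \<open>(x,a) \<in> M\<close> in blast)
  qed
  have "linear u"
  proof (rule linearI)
    fix x y show "u (x + y) = u x + u y" using Mfun[OF uM Madd[OF uM uM]] .
  next
    fix c x show "u (c *\<^sub>R x) = c *\<^sub>R u x" using Mfun[OF uM Msc[OF uM]] by simp
  qed
  moreover have "\<forall>x. u x \<le> p x" using Mp[OF uM] by blast
  ultimately show ?thesis by blast
qed

lemma convex_scale_in: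
  assumes "convex S" "0 \<in> S" "x \<in> S" "0 \<le> c" "c \<le> 1"
  shows "c *\<^sub>R x \<in> S"
  using convexD[OF assms(1) assms(3) assms(2), of c "1 - c"] assms(4,5) by simp

lemma iter_lemma:
  fixes L :: "'x::banach \<Rightarrow> 'z::real_normed_vector"
  assumes L: "bounded_linear L" and cD: "convex D" and clD: "closed D" and D0: "0 \<in> D"
    and Dn: "\<And>d. d \<in> D \<Longrightarrow> norm d \<le> 1"
    and Y: "subspace Y" and LDY: "L ` D \<subseteq> Y" and r: "r > 0"
    and cl: "\<And>z. z \<in> Y \<Longrightarrow> norm z < r \<Longrightarrow> z \<in> closure (L ` D)"
  shows "\<And>z. z \<in> Y \<Longrightarrow> norm z < r/2 \<Longrightarrow> z \<in> L ` D"
proof -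
  have lin: "linear L" using L bounded_linear.linear by blast
  have approx: "\<exists>d. z \<in> Y \<and> norm z < r * (1/2)^k \<longrightarrow> d \<in> D \<and> norm (z - L ((1/2)^k *\<^sub>R d)) < r * (1/2)^(Suc k)"
    for k z
  proof (cases "z \<in> Y \<and> norm z < r * (1/2)^k")
    case True
    define w where "w = ((2::real)^k) *\<^sub>R z"
    have wY: "w \<in> Y" using True Y unfolding w_def by (simp add: subspace_scale)
    have "norm w = 2^k * norm z" by (simp add: w_def)
    also have "\<dots> < 2^k * (r * (1/2)^k)" using True by simp
    also have "\<dots> = r" by (simp add: power_one_over)
    finally have "w \<in> closure (L ` D)" using cl wY by blast
    then obtain e where e: "e \<in> L ` D" "dist e w < r/2" using r by (meson closure_approachable half_gt_zero)
    then obtain d where d: "d \<in> D" "e = L d" by blast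
    have "z - L ((1/2)^k *\<^sub>R d) = (1/2)^k *\<^sub>R (w - L d)"
      by (simp add: w_def linear_scale[OF lin] scaleR_diff_right power_one_over)
    then have "norm (z - L ((1/2)^k *\<^sub>R d)) = (1/2)^k * norm (w - L d)" by simp
    also have "\<dots> < (1/2)^k * (r/2)" using e d by (simp add: dist_norm norm_minus_commute)
    also have "\<dots> = r * (1/2)^(Suc k)" by simp
    finally show ?thesis using d by blast
  qed auto
  define ch where "ch k z = (SOME d. z \<in> Y \<and> norm z < r * (1/2)^k \<longrightarrow> d \<in> D \<and> norm (z - L ((1/2)^k *\<^sub>R d)) < r * (1/2)^(Suc k))" for k z
  have ch: "\<And>k z. z \<in> Y \<Longrightarrow> norm z < r * (1/2)^k \<Longrightarrow>
      ch k z \<in> D \<and> norm (z - L ((1/2)^k *\<^sub>R ch k z)) < r * (1/2)^(Suc k)"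
  proof -
    fix k z assume "z \<in> Y" "norm z < r * (1/2)^k"
    from someI_ex[OF approx[of z k]] show "ch k z \<in> D \<and> norm (z - L ((1/2)^k *\<^sub>R ch k z)) < r * (1/2)^(Suc k)"
      using \<open>z \<in> Y\<close> \<open>norm z < r * (1/2)^k\<close> unfolding ch_def by blast
  qed
  fix z assume zY: "z \<in> Y" and zn: "norm z < r/2"
  define zs where "zs = rec_nat z (\<lambda>n w. w - L ((1/2)^(Suc n) *\<^sub>R ch (Suc n) w))"
  have zs0: "zs 0 = z" and zsS: "zs (Suc n) = zs n - L ((1/2)^(Suc n) *\<^sub>R ch (Suc n) (zs n))" for n
    by (simp_all add: zs_def)
  define ds where "ds n = ch (Suc n) (zs n)" for n
  have inv: "zs n \<in> Y \<and> norm (zs n) < r * (1/2)^(Suc n)" for n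
  proof (induction n)
    case 0 then show ?case using zY zn zs0 by simp
  next
    case (Suc n)
    have c: "ch (Suc n) (zs n) \<in> D \<and> norm (zs n - L ((1/2)^(Suc n) *\<^sub>R ch (Suc n) (zs n))) < r * (1/2)^(Suc (Suc n))"
      using ch Suc by blast
    have "L ((1/2)^(Suc n) *\<^sub>R ch (Suc n) (zs n)) \<in> Y"
      using c LDY Y by (simp add: linear_scale[OF lin] subspace_scale image_subset_iff)
    then have "zs (Suc n) \<in> Y" using Suc Y by (simp add: zsS subspace_diff)
    then show ?case using c zsS by simp
  qed
  have dsD: "ds n \<in> D" for n using ch inv unfolding ds_def by blast
  define f where "f k = (1/2::real)^(Suc k) *\<^sub>R ds k" for k
  define ps where "ps n = (\<Sum>k<n. f k)" for n
  have Lps: "L (ps n) = z - zs n" for n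
  proof (induction n)
    case 0 then show ?case by (simp add: ps_def zs0 linear_0[OF lin])
  next
    case (Suc n)
    have "L (ps (Suc n)) = L (ps n) + L (f n)" by (simp add: ps_def linear_add[OF lin])
    then show ?case using Suc by (simp add: zsS f_def ds_def)
  qed
  have psD: "\<exists>e\<in>D. ps n = (1 - (1/2)^n) *\<^sub>R e" for n
  proof (induction n)
    case 0 then show ?case using D0 by (auto simp: ps_def)
  next
    case (Suc n)
    then obtain e where e: "e \<in> D" "ps n = (1 - (1/2)^n) *\<^sub>R e" by blast
    define c :: real where "c = 1 - (1/2)^(Suc n)"
    have hn: "(1/2::real)^n \<le> 1" by (simp add: power_le_one)
    have cpos: "c > 0" unfolding c_def using hn by simp
    define e' where "e' = ((1 - (1/2)^n) / c) *\<^sub>R e + ((1/2)^(Suc n) / c) *\<^sub>R ds n"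
    have sum1: "(1 - (1/2::real)^n) / c + (1/2)^(Suc n) / c = 1"
    proof -
      have "(1/2::real)^n = 2 * (1/2)^(Suc n)" by simp
      then have num: "(1 - (1/2::real)^n) + (1/2)^(Suc n) = c" unfolding c_def by linarith
      show ?thesis unfolding add_divide_distrib[symmetric] num using cpos by simp
    qed
    have "e' \<in> D" unfolding e'_def
      by (rule convexD[OF cD e(1) dsD _ _ sum1]) (use cpos hn in auto)
    moreover have "ps (Suc n) = c *\<^sub>R e'"
      using cpos e(2) by (simp add: e'_def ps_def f_def scaleR_add_right)
    ultimately show ?case unfolding c_def by blast
  qed
  have psD': "ps n \<in> D" for n
  proof -
    obtain e where "e \<in> D" "ps n = (1 - (1/2)^n) *\<^sub>R e" using psD by blast
    moreover have "(1/2::real)^n \<le> 1" by (simp add: power_le_one)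
    ultimately show ?thesis using convex_scale_in[OF cD D0] by simp
  qed
  have summ: "summable f"
  proof (rule summable_comparison_test'[where N=0])
    show "summable (\<lambda>k. (1/2::real) * (1/2)^k)" by (intro summable_mult summable_geometric) simp
    fix k show "norm (f k) \<le> (1/2) * (1/2)^k"
      using Dn[OF dsD[of k]] by (simp add: f_def mult_left_le)
  qed
  have lim: "ps \<longlonglongrightarrow> suminf f" unfolding ps_def by (rule summable_LIMSEQ[OF summ])
  have sD: "suminf f \<in> D" by (rule closed_sequentially[OF clD psD' lim])
  have l1: "(\<lambda>n. L (ps n)) \<longlonglongrightarrow> L (suminf f)" by (rule bounded_linear.tendsto[OF L lim])
  have z0: "zs \<longlonglongrightarrow> 0"
  proof (rule Lim_null_comparison)
    show "\<forall>\<^sub>F n in sequentially. norm (zs n) \<le> r * (1/2)^(Suc n)"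
      by (rule always_eventually) (use inv less_imp_le in blast)
    show "(\<lambda>n. r * (1/2::real)^(Suc n)) \<longlonglongrightarrow> 0"
      by (intro tendsto_mult_right_zero LIMSEQ_Suc LIMSEQ_power_zero) simp
  qed
  have l2: "(\<lambda>n. L (ps n)) \<longlonglongrightarrow> z"
    unfolding Lps using tendsto_diff[OF tendsto_const z0, of z] by simp
  have "L (suminf f) = z" using LIMSEQ_unique[OF l1 l2] .
  then show "z \<in> L ` D" using sD by blast
qed

lemma baire_part:
  fixes K :: "'z::banach set"
  assumes Ycl: "closed Y" and Ysub: "subspace Y" and cK: "convex K" and KY: "K \<subseteq> Y"
    and Kcl: "closed K" and absorb: "\<And>z. z \<in> Y \<Longrightarrow> \<exists>t>0. t *\<^sub>R z \<in> K"
  shows "\<exists>r>0. \<forall>z\<in>Y. norm z < r \<longrightarrow> z \<in> K"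
proof -
  have K0: "0 \<in> K" using absorb[of 0] Ysub by (auto simp: subspace_0)
  define T where "T n = Y \<inter> ((\<lambda>z. (1 / real (Suc n)) *\<^sub>R z) -` K)" for n
  define G where "G = range T"
  have clT: "closedin (top_of_set Y) (T n)" for n
    unfolding T_def by (intro closedin_closed_Int continuous_closed_vimage Kcl) (intro continuous_intros)
  have UG: "\<Union>G = Y"
  proof
    show "\<Union>G \<subseteq> Y" by (auto simp: G_def T_def)
    show "Y \<subseteq> \<Union>G"
    proof
      fix z assume z: "z \<in> Y"
      obtain t where t: "t > 0" "t *\<^sub>R z \<in> K" using absorb[OF z] by blast
      obtain n :: nat where n: "1 / t < real n" using reals_Archimedean2 by blast
      have "(1 / real (Suc n)) *\<^sub>R z = (1 / (real (Suc n) * t)) *\<^sub>R (t *\<^sub>R z)" using t by simp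
      moreover have "1 / (real (Suc n) * t) \<le> 1"
      proof -
        have "1 < real n * t" using n t by (simp add: field_simps)
        then have "1 \<le> real (Suc n) * t" using t by (simp add: distrib_right)
        then show ?thesis by simp
      qed
      moreover have "(1 / (real (Suc n) * t)) *\<^sub>R (t *\<^sub>R z) \<in> K"
        by (rule convex_scale_in[OF cK K0 t(2)]) (use t calculation in auto)
      ultimately have "(1 / real (Suc n)) *\<^sub>R z \<in> K" by metis
      then show "z \<in> \<Union>G" using z by (auto simp: G_def T_def)
    qed
  qed
  have cms: "completely_metrizable_space (top_of_set Y)"
    by (rule completely_metrizable_space_closedin[OF completely_metrizable_space_euclidean])
       (use Ycl closed_closedin in blast)
  have "\<exists>n. top_of_set Y interior_of T n \<noteq> {}"
  proof (rule ccontr)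
    assume "\<not> ?thesis"
    then have "top_of_set Y interior_of \<Union>G = {}"
      using Baire_category_alt[OF disjI1[OF cms], of G] clT by (auto simp: G_def)
    moreover have "top_of_set Y interior_of \<Union>G = Y" using UG interior_of_topspace[of "top_of_set Y"] by simp
    ultimately show False using K0 KY by auto
  qed
  then obtain n x where x: "x \<in> top_of_set Y interior_of T n" by blast
  then obtain U where U: "openin (top_of_set Y) U" "x \<in> U" "U \<subseteq> T n" by (auto simp: interior_of_def)
  then obtain \<epsilon> where e: "\<epsilon> > 0" "ball x \<epsilon> \<inter> Y \<subseteq> U" by (meson openin_contains_ball)
  define N where "N = real (Suc n)"
  have Npos: "N > 0" by (simp add: N_def)
  define a where "a = (1/N) *\<^sub>R x"
  have xY: "x \<in> Y" using U by (meson openin_imp_subset subsetD)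
  have nearK: "w \<in> K" if wY: "w \<in> Y" and wn: "norm (w - a) < \<epsilon> / N" for w
  proof -
    have zY: "N *\<^sub>R w \<in> Y" using wY Ysub by (simp add: subspace_scale)
    have "x - N *\<^sub>R w = N *\<^sub>R (a - w)" using Npos by (simp add: a_def scaleR_diff_right)
    then have "dist x (N *\<^sub>R w) = N * norm (w - a)" using Npos by (simp add: dist_norm norm_minus_commute)
    also have "\<dots> < \<epsilon>" using wn Npos by (simp add: field_simps)
    finally have "N *\<^sub>R w \<in> T n" using e U zY by auto
    then show ?thesis using Npos by (simp add: T_def N_def)
  qed
  have aY: "a \<in> Y" using xY Ysub by (simp add: a_def subspace_scale)
  obtain t where t: "t > 0" "t *\<^sub>R (- a) \<in> K" using absorb[of "-a"] aY Ysub by (meson subspace_neg)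
  define r where "r = \<epsilon> * t / (N * (1 + t))"
  have rpos: "r > 0" using e t Npos by (simp add: r_def)
  have "\<forall>v\<in>Y. norm v < r \<longrightarrow> v \<in> K"
  proof (intro ballI impI)
    fix v assume vY: "v \<in> Y" and vn: "norm v < r"
    define w where "w = ((1 + t) / t) *\<^sub>R v + a"
    have wY: "w \<in> Y" using vY aY Ysub by (simp add: w_def subspace_scale subspace_add)
    have "norm (w - a) = ((1 + t) / t) * norm v" using t by (simp add: w_def)
    also have "\<dots> < ((1 + t) / t) * r" using vn t by (intro mult_strict_left_mono) auto
    also have "\<dots> = \<epsilon> / N"
    proof -
      show ?thesis unfolding r_def using t Npos by (simp add: divide_simps)
    qed
    finally have wK: "w \<in> K" using nearK wY by blast
    have c1: "(t/(1+t)) * ((1+t)/t) = 1" using t by (simp add: divide_simps)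
    have "(1 / (1 + t)) *\<^sub>R (t *\<^sub>R (- a)) + (t / (1 + t)) *\<^sub>R w
        = ((t/(1+t)) * ((1+t)/t)) *\<^sub>R v + ((t/(1+t)) - (1/(1+t))*t) *\<^sub>R a"
      by (simp add: w_def algebra_simps)
    then have "v = (1 / (1 + t)) *\<^sub>R (t *\<^sub>R (- a)) + (t / (1 + t)) *\<^sub>R w"
      using c1 by simp
    also have "\<dots> \<in> K" by (rule convexD[OF cK t(2) wK]) (use t in \<open>auto simp: field_simps\<close>)
    finally show "v \<in> K" .
  qed
  then show ?thesis using rpos by blast
qed

lemma open_mapping_lemma:
  fixes L :: "'x::banach \<Rightarrow> 'z::banach"
  assumes L: "bounded_linear L" and cD: "convex D" and clD: "closed D" and D0: "0 \<in> D"
    and Dn: "\<And>d. d \<in> D \<Longrightarrow> norm d \<le> 1"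
    and Ycl: "closed Y" and Y: "subspace Y" and LDY: "L ` D \<subseteq> Y"
    and absorb: "\<And>z. z \<in> Y \<Longrightarrow> \<exists>t>0. t *\<^sub>R z \<in> L ` D"
  shows "\<exists>r>0. \<forall>z\<in>Y. norm z < r \<longrightarrow> z \<in> L ` D"
proof -
  have lin: "linear L" using L bounded_linear.linear by blast
  have "\<exists>r>0. \<forall>z\<in>Y. norm z < r \<longrightarrow> z \<in> closure (L ` D)"
  proof (rule baire_part[OF Ycl Y])
    show "convex (closure (L ` D))" using convex_linear_image[OF lin cD] by simp
    show "closure (L ` D) \<subseteq> Y" using LDY Ycl by (simp add: closure_minimal)
    show "\<And>z. z \<in> Y \<Longrightarrow> \<exists>t>0. t *\<^sub>R z \<in> closure (L ` D)"
      using absorb closure_subset by blast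
  qed simp
  then obtain r where r: "r > 0" "\<And>z. z \<in> Y \<Longrightarrow> norm z < r \<Longrightarrow> z \<in> closure (L ` D)" by blast
  have "\<And>z. z \<in> Y \<Longrightarrow> norm z < r/2 \<Longrightarrow> z \<in> L ` D"
    by (rule iter_lemma[OF L cD clD D0 Dn Y LDY r(1) r(2)])
  then show ?thesis using r(1) by (intro exI[of _ "r/2"]) auto
qed

lemma conv_real:
  fixes k :: "'b::real_vector \<Rightarrow> ereal"
  assumes cv: "convex_fun k" and nm: "\<And>z. k z \<noteq> -\<infinity>" and z: "k z \<noteq> \<infinity>" and w: "k w \<noteq> \<infinity>"
    and t: "0 \<le> t" "t \<le> 1"
  shows "k ((1-t) *\<^sub>R z + t *\<^sub>R w) \<noteq> \<infinity> \<and>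
    real_of_ereal (k ((1-t) *\<^sub>R z + t *\<^sub>R w)) \<le> (1-t) * real_of_ereal (k z) + t * real_of_ereal (k w)"
proof -
  obtain a where a: "k z = ereal a" using z nm[of z] by (cases "k z") auto
  obtain b where b: "k w = ereal b" using w nm[of w] by (cases "k w") auto
  consider "t = 0" | "t = 1" | "0 < t \<and> t < 1" using t by linarith
  then show ?thesis
  proof cases
    case 1 then show ?thesis using a by simp
  next
    case 2 then show ?thesis using b by simp
  next
    case 3
    have "k ((1-t) *\<^sub>R z + t *\<^sub>R w) \<le> ereal (1-t) * k z + ereal t * k w"
      using cv 3 unfolding convex_fun_def by blast
    also have "\<dots> = ereal ((1-t)*a + t*b)" using a b by simp
    finally have le: "k ((1-t) *\<^sub>R z + t *\<^sub>R w) \<le> ereal ((1-t)*a + t*b)" .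
    obtain c where "k ((1-t) *\<^sub>R z + t *\<^sub>R w) = ereal c"
      using le nm[of "(1-t) *\<^sub>R z + t *\<^sub>R w"] by (cases "k ((1-t) *\<^sub>R z + t *\<^sub>R w)") auto
    then show ?thesis using le a b by simp
  qed
qed

lemma le_ereal_iff:
  assumes "x \<noteq> -\<infinity>"
  shows "x \<le> ereal c \<longleftrightarrow> x \<noteq> \<infinity> \<and> real_of_ereal x \<le> c"
  using assms by (cases x) auto

lemma key:
  fixes f g h :: "'a::banach \<times> ('a \<Rightarrow>\<^sub>L real) \<Rightarrow> ereal"
  assumes fcv: "convex_fun f" and gcv: "convex_fun g" and flsc: "lsc_fun f" and glsc: "lsc_fun g"
    and fq: "\<And>p. f p \<ge> ereal (qform p)" and gq: "\<And>p. g p \<ge> ereal (qform p)"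
    and Ysub: "subspace Y" and Ycl: "closed Y"
    and Ydef: "Y = (\<Union>c\<in>{0::real<..}. (\<lambda>v. c *\<^sub>R v) ` {a - b | a b. a \<in> fst ` fdom f \<and> b \<in> fst ` fdom g})"
    and hdef: "\<And>x xs. h (x, xs) = (INF st \<in> {(s, t). s + t = xs}. f (x, fst st) + g (x, snd st))"
  shows "\<exists>u. fconj f (y,u) + fconj g (y, ys - u) \<le> fconj h (y, ys)"
proof -
  have fnm: "f p \<noteq> -\<infinity>" for p using fq[of p] by auto
  have gnm: "g p \<noteq> -\<infinity>" for p using gq[of p] by auto
  have Ymem: "z \<in> Y \<longleftrightarrow> (\<exists>c>0. \<exists>p1 p2. f p1 \<noteq> \<infinity> \<and> g p2 \<noteq> \<infinity> \<and> z = c *\<^sub>R (fst p1 - fst p2))" for z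
  proof
    assume "z \<in> Y"
    then show "\<exists>c>0. \<exists>p1 p2. f p1 \<noteq> \<infinity> \<and> g p2 \<noteq> \<infinity> \<and> z = c *\<^sub>R (fst p1 - fst p2)"
      unfolding Ydef fdom_def by blast
  next
    assume "\<exists>c>0. \<exists>p1 p2. f p1 \<noteq> \<infinity> \<and> g p2 \<noteq> \<infinity> \<and> z = c *\<^sub>R (fst p1 - fst p2)"
    then obtain c p1 p2 where c: "c > 0" "f p1 \<noteq> \<infinity>" "g p2 \<noteq> \<infinity>" "z = c *\<^sub>R (fst p1 - fst p2)" by blast
    have "fst p1 - fst p2 \<in> {a - b | a b. a \<in> fst ` fdom f \<and> b \<in> fst ` fdom g}"
      using c fnm gnm unfolding fdom_def by blast
    then show "z \<in> Y" unfolding Ydef using c by blast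
  qed
  obtain p1 p2 where p12: "f p1 \<noteq> \<infinity>" "g p2 \<noteq> \<infinity>" "fst p1 = fst p2"
    using Ymem[of 0] Ysub subspace_0 by fastforce
  define a0 where "a0 = fst p1"
  define s0 where "s0 = snd p1"
  define t0 where "t0 = snd p2"
  have f0: "f (a0, s0) \<noteq> \<infinity>" and g0: "g (a0, t0) \<noteq> \<infinity>"
    using p12 by (simp_all add: a0_def s0_def t0_def) (metis prod.collapse)+
  have hle: "h (x, s + t) \<le> f (x, s) + g (x, t)" for x s t
    unfolding hdef by (rule INF_lower2[of "(s,t)"]) auto
  have Hbase: "ereal (blinfun_apply ys x + blinfun_apply (s + t) y) - h (x, s + t) \<le> fconj h (y, ys)" for x s t
    unfolding fconj_def by (rule SUP_upper2[of "(x, s+t)"]) (auto simp: bpair_def)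
  have H0: "ereal (blinfun_apply ys x + blinfun_apply (s + t) y) - (f (x,s) + g (x,t)) \<le> fconj h (y, ys)" for x s t
    by (rule order_trans[OF _ Hbase[of x s t]]) (intro ereal_minus_mono hle order_refl)
  show ?thesis
  proof (cases "fconj h (y, ys) = \<infinity>")
    case True then show ?thesis by simp
  next
    case False
    have "fconj h (y, ys) \<noteq> -\<infinity>"
      using H0[of a0 s0 t0] f0 g0 fnm[of "(a0,s0)"] gnm[of "(a0,t0)"]
      by (cases "f (a0,s0)"; cases "g (a0,t0)"; auto)
    then obtain M where M: "fconj h (y, ys) = ereal M" using False by (cases "fconj h (y, ys)") auto
    have H: "blinfun_apply ys x + blinfun_apply (s + t) y - real_of_ereal (f (x,s)) - real_of_ereal (g (x,t)) \<le> M"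
      if "f (x,s) \<noteq> \<infinity>" "g (x,t) \<noteq> \<infinity>" for x s t
      using H0[of x s t] that fnm[of "(x,s)"] gnm[of "(x,t)"] M
      by (cases "f (x,s)"; cases "g (x,t)"; auto)

    define W where "W = {w :: ('a \<times> ('a \<Rightarrow>\<^sub>L real)) \<times> ('a \<times> ('a \<Rightarrow>\<^sub>L real)). f (fst w) \<noteq> \<infinity> \<and> g (snd w) \<noteq> \<infinity>}"
    define lin where "lin w = blinfun_apply (snd (fst w)) y + blinfun_apply (snd (snd w)) y + blinfun_apply ys (fst (snd w))"
      for w :: "('a \<times> ('a \<Rightarrow>\<^sub>L real)) \<times> ('a \<times> ('a \<Rightarrow>\<^sub>L real))"
    define psi where "psi w = M + real_of_ereal (f (fst w)) + real_of_ereal (g (snd w)) - lin w"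
      for w :: "('a \<times> ('a \<Rightarrow>\<^sub>L real)) \<times> ('a \<times> ('a \<Rightarrow>\<^sub>L real))"
    define L where "L w = fst (fst w) - fst (snd w)" for w :: "('a \<times> ('a \<Rightarrow>\<^sub>L real)) \<times> ('a \<times> ('a \<Rightarrow>\<^sub>L real))"
    define w0 where "w0 = ((a0, s0), (a0, t0))"
    have w0W: "w0 \<in> W" using f0 g0 by (simp add: W_def w0_def)
    have Lw0: "L w0 = 0" by (simp add: L_def w0_def)
    have Lbl: "bounded_linear L" unfolding L_def
      by (intro bounded_linear_sub bounded_linear_compose[OF bounded_linear_fst bounded_linear_fst]
          bounded_linear_compose[OF bounded_linear_fst bounded_linear_snd])
    have Llin: "linear L" using Lbl bounded_linear.linear by blast
    have P1: "psi w \<ge> 0" if "w \<in> W" "L w = 0" for w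
    proof -
      obtain x s x' t where w: "w = ((x,s),(x',t))" by (metis prod.collapse)
      have e: "x' = x" using that(2) w by (simp add: L_def)
      have "blinfun_apply ys x + blinfun_apply (s + t) y - real_of_ereal (f (x,s)) - real_of_ereal (g (x,t)) \<le> M"
        using H that(1) e w by (simp add: W_def)
      then show ?thesis using e w by (simp add: psi_def lin_def blinfun.add_left)
    qed
    have P2: "(1-l) *\<^sub>R w1 + l *\<^sub>R w2 \<in> W \<and> psi ((1-l) *\<^sub>R w1 + l *\<^sub>R w2) \<le> (1-l) * psi w1 + l * psi w2"
      if "w1 \<in> W" "w2 \<in> W" "0 \<le> l" "l \<le> 1" for w1 w2 l
    proof -
      have cf: "f ((1-l) *\<^sub>R fst w1 + l *\<^sub>R fst w2) \<noteq> \<infinity> \<and> real_of_ereal (f ((1-l) *\<^sub>R fst w1 + l *\<^sub>R fst w2))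
          \<le> (1-l) * real_of_ereal (f (fst w1)) + l * real_of_ereal (f (fst w2))"
        by (rule conv_real[OF fcv fnm]) (use that in \<open>auto simp: W_def\<close>)
      have cg: "g ((1-l) *\<^sub>R snd w1 + l *\<^sub>R snd w2) \<noteq> \<infinity> \<and> real_of_ereal (g ((1-l) *\<^sub>R snd w1 + l *\<^sub>R snd w2))
          \<le> (1-l) * real_of_ereal (g (snd w1)) + l * real_of_ereal (g (snd w2))"
        by (rule conv_real[OF gcv gnm]) (use that in \<open>auto simp: W_def\<close>)
      have ll: "lin ((1-l) *\<^sub>R w1 + l *\<^sub>R w2) = (1-l) * lin w1 + l * lin w2"
        by (simp add: lin_def blinfun.add_left blinfun.scaleR_left blinfun.add_right blinfun.scaleR_right
            blinfun.diff_left blinfun.diff_right algebra_simps)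
      have "psi ((1-l) *\<^sub>R w1 + l *\<^sub>R w2) = M + real_of_ereal (f ((1-l) *\<^sub>R fst w1 + l *\<^sub>R fst w2))
            + real_of_ereal (g ((1-l) *\<^sub>R snd w1 + l *\<^sub>R snd w2)) - ((1-l) * lin w1 + l * lin w2)"
        by (simp add: psi_def ll)
      also have "\<dots> \<le> M + ((1-l) * real_of_ereal (f (fst w1)) + l * real_of_ereal (f (fst w2)))
            + ((1-l) * real_of_ereal (g (snd w1)) + l * real_of_ereal (g (snd w2))) - ((1-l) * lin w1 + l * lin w2)"
        using cf cg by linarith
      also have "\<dots> = (1-l) * psi w1 + l * psi w2" by (simp add: psi_def algebra_simps)
      finally show ?thesis using cf cg by (simp add: W_def)
    qed

    define rf0 where "rf0 = real_of_ereal (f (fst w0))"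
    define rg0 where "rg0 = real_of_ereal (g (snd w0))"
    define D where "D = {d. norm d \<le> 1 \<and> f (fst (w0 + d)) \<le> ereal (rf0 + 1) \<and> g (snd (w0 + d)) \<le> ereal (rg0 + 1)}"
    have Dalt: "d \<in> D \<longleftrightarrow> norm d \<le> 1 \<and> w0 + d \<in> W \<and> real_of_ereal (f (fst (w0+d))) \<le> rf0 + 1
                   \<and> real_of_ereal (g (snd (w0+d))) \<le> rg0 + 1" for d
      unfolding D_def W_def using le_ereal_iff[OF fnm] le_ereal_iff[OF gnm] by auto
    have D0: "0 \<in> D" using w0W by (simp add: Dalt rf0_def rg0_def)
    have Dn: "norm d \<le> 1" if "d \<in> D" for d using that by (simp add: D_def)
    have DW: "w0 + d \<in> W" if "d \<in> D" for d using that by (simp add: Dalt)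
    have clD: "closed D"
    proof -
      have "D = cball 0 1 \<inter> (\<lambda>d. fst (w0 + d)) -` {z. f z \<le> ereal (rf0+1)} \<inter> (\<lambda>d. snd (w0 + d)) -` {z. g z \<le> ereal (rg0+1)}"
        by (auto simp: D_def)
      moreover have "closed (cball 0 1 \<inter> (\<lambda>d. fst (w0 + d)) -` {z. f z \<le> ereal (rf0+1)} \<inter> (\<lambda>d. snd (w0 + d)) -` {z. g z \<le> ereal (rg0+1)})"
        by (intro closed_Int closed_cball continuous_closed_vimage)
           (use flsc glsc in \<open>auto simp: lsc_fun_def intro!: continuous_intros\<close>)
      ultimately show ?thesis by simp
    qed
    have cD: "convex D"
      unfolding convex_alt
    proof (intro ballI allI impI)
      fix d1 d2 and l :: real assume d1: "d1 \<in> D" and d2: "d2 \<in> D" and l: "0 \<le> l \<and> l \<le> 1"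
      have eq: "w0 + ((1-l) *\<^sub>R d1 + l *\<^sub>R d2) = (1-l) *\<^sub>R (w0 + d1) + l *\<^sub>R (w0 + d2)"
        by (simp add: algebra_simps)
      have cf: "f ((1-l) *\<^sub>R fst (w0+d1) + l *\<^sub>R fst (w0+d2)) \<noteq> \<infinity> \<and> real_of_ereal (f ((1-l) *\<^sub>R fst (w0+d1) + l *\<^sub>R fst (w0+d2)))
          \<le> (1-l) * real_of_ereal (f (fst (w0+d1))) + l * real_of_ereal (f (fst (w0+d2)))"
        by (rule conv_real[OF fcv fnm]) (use d1 d2 l DW in \<open>auto simp: W_def\<close>)
      have cg: "g ((1-l) *\<^sub>R snd (w0+d1) + l *\<^sub>R snd (w0+d2)) \<noteq> \<infinity> \<and> real_of_ereal (g ((1-l) *\<^sub>R snd (w0+d1) + l *\<^sub>R snd (w0+d2)))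
          \<le> (1-l) * real_of_ereal (g (snd (w0+d1))) + l * real_of_ereal (g (snd (w0+d2)))"
        by (rule conv_real[OF gcv gnm]) (use d1 d2 l DW in \<open>auto simp: W_def\<close>)
      have f1: "real_of_ereal (f (fst (w0+d1))) \<le> rf0 + 1" "real_of_ereal (f (fst (w0+d2))) \<le> rf0 + 1"
        "real_of_ereal (g (snd (w0+d1))) \<le> rg0 + 1" "real_of_ereal (g (snd (w0+d2))) \<le> rg0 + 1"
        using d1 d2 by (simp_all add: Dalt)
      have "(1-l) * real_of_ereal (f (fst (w0+d1))) + l * real_of_ereal (f (fst (w0+d2))) \<le> (1-l) * (rf0+1) + l * (rf0+1)"
        using f1 l by (intro add_mono mult_left_mono) auto
      moreover have "(1-l) * real_of_ereal (g (snd (w0+d1))) + l * real_of_ereal (g (snd (w0+d2))) \<le> (1-l) * (rg0+1) + l * (rg0+1)"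
        using f1 l by (intro add_mono mult_left_mono) auto
      moreover have "norm ((1-l) *\<^sub>R d1 + l *\<^sub>R d2) \<le> 1"
      proof -
        have "norm ((1-l) *\<^sub>R d1 + l *\<^sub>R d2) \<le> (1-l) * norm d1 + l * norm d2"
          using l by (metis (no_types) abs_of_nonneg diff_ge_0_iff_ge norm_scaleR norm_triangle_ineq)
        also have "\<dots> \<le> (1-l) * 1 + l * 1" using Dn[OF d1] Dn[OF d2] l by (intro add_mono mult_left_mono) auto
        finally show ?thesis by simp
      qed
      ultimately show "(1-l) *\<^sub>R d1 + l *\<^sub>R d2 \<in> D"
        unfolding Dalt eq using cf cg by (simp add: W_def algebra_simps)
    qed
    have LD: "L d = L (w0 + d)" for d using Lw0 linear_add[OF Llin] by simp
    have LWY: "L w \<in> Y" if "w \<in> W" for w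
      using that unfolding Ymem W_def L_def by (intro exI[of _ 1]) (auto, metis prod.collapse)
    have LDY: "L ` D \<subseteq> Y"
    proof
      fix z assume "z \<in> L ` D"
      then obtain d where "d \<in> D" "z = L d" by blast
      then show "z \<in> Y" using LWY[OF DW[OF \<open>d \<in> D\<close>]] LD[of d] by metis
    qed
    have absorb: "\<exists>t>0. t *\<^sub>R z \<in> L ` D" if "z \<in> Y" for z
    proof -
      obtain c p1 p2 where c: "c > 0" "f p1 \<noteq> \<infinity>" "g p2 \<noteq> \<infinity>" "z = c *\<^sub>R (fst p1 - fst p2)"
        using Ymem[of z] \<open>z \<in> Y\<close> by blast
      define w where "w = (p1, p2)"
      have wW: "w \<in> W" using c by (simp add: W_def w_def)
      define rf1 where "rf1 = real_of_ereal (f (fst w))"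
      define rg1 where "rg1 = real_of_ereal (g (snd w))"
      define Den where "Den = norm (w - w0) + \<bar>rf1 - rf0\<bar> + \<bar>rg1 - rg0\<bar> + 1"
      have Den1: "Den \<ge> 1" unfolding Den_def using norm_ge_zero[of "w - w0"] by linarith
      define \<tau> where "\<tau> = 1 / Den"
      have tpos: "\<tau> > 0" using Den1 by (simp add: \<tau>_def)
      have tle: "\<tau> * a \<le> 1" if "a \<le> Den" for a
        using that Den1 by (simp add: \<tau>_def field_simps)
      have t1: "\<tau> \<le> 1" using tle[of 1] Den1 by simp
      have tn: "\<tau> * norm (w - w0) \<le> 1" by (rule tle) (simp add: Den_def)
      have tf: "\<tau> * \<bar>rf1 - rf0\<bar> \<le> 1" by (rule tle) (simp add: Den_def)
      have tg: "\<tau> * \<bar>rg1 - rg0\<bar> \<le> 1" by (rule tle) (simp add: Den_def)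
      define d where "d = \<tau> *\<^sub>R (w - w0)"
      have eq: "w0 + d = (1-\<tau>) *\<^sub>R w0 + \<tau> *\<^sub>R w" by (simp add: d_def algebra_simps)
      have cf: "f ((1-\<tau>) *\<^sub>R fst w0 + \<tau> *\<^sub>R fst w) \<noteq> \<infinity> \<and> real_of_ereal (f ((1-\<tau>) *\<^sub>R fst w0 + \<tau> *\<^sub>R fst w))
          \<le> (1-\<tau>) * rf0 + \<tau> * rf1"
        unfolding rf0_def rf1_def by (rule conv_real[OF fcv fnm]) (use w0W wW tpos t1 in \<open>auto simp: W_def\<close>)
      have cg: "g ((1-\<tau>) *\<^sub>R snd w0 + \<tau> *\<^sub>R snd w) \<noteq> \<infinity> \<and> real_of_ereal (g ((1-\<tau>) *\<^sub>R snd w0 + \<tau> *\<^sub>R snd w))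
          \<le> (1-\<tau>) * rg0 + \<tau> * rg1"
        unfolding rg0_def rg1_def by (rule conv_real[OF gcv gnm]) (use w0W wW tpos t1 in \<open>auto simp: W_def\<close>)
      have "(1-\<tau>) * rf0 + \<tau> * rf1 \<le> rf0 + 1"
      proof -
        have "\<tau> * (rf1 - rf0) \<le> 1" using tf tpos by (metis abs_ge_self mult_left_mono less_imp_le order_trans)
        then show ?thesis by (simp add: algebra_simps)
      qed
      moreover have "(1-\<tau>) * rg0 + \<tau> * rg1 \<le> rg0 + 1"
      proof -
        have "\<tau> * (rg1 - rg0) \<le> 1" using tg tpos by (metis abs_ge_self mult_left_mono less_imp_le order_trans)
        then show ?thesis by (simp add: algebra_simps)
      qed
      moreover have "norm d \<le> 1" using tn tpos by (simp add: d_def)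
      ultimately have dD: "d \<in> D" unfolding Dalt eq using cf cg by (simp add: W_def)
      have "L d = \<tau> *\<^sub>R (fst p1 - fst p2)"
        by (simp add: d_def linear_scale[OF Llin] linear_diff[OF Llin] Lw0) (simp add: L_def w_def)
      then have "(\<tau> / c) *\<^sub>R z = L d" using c by simp
      then show ?thesis using dD tpos c by (intro exI[of _ "\<tau>/c"]) auto
    qed
    obtain r where r: "r > 0" "\<And>z. z \<in> Y \<Longrightarrow> norm z < r \<Longrightarrow> z \<in> L ` D"
      using open_mapping_lemma[OF Lbl cD clD D0 Dn Ycl Ysub LDY absorb] by blast

    define C where "C = M + (rf0 + 1) + (rg0 + 1) + (norm w0 + 1) * (2 * norm y + norm ys)"
    have nfst: "norm (fst v) \<le> norm v" for v :: "'a \<times> ('a \<Rightarrow>\<^sub>L real)"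
      by (metis norm_fst_le prod.collapse)
    have nsnd: "norm (snd v) \<le> norm v" for v :: "'a \<times> ('a \<Rightarrow>\<^sub>L real)"
      by (metis norm_snd_le prod.collapse)
    have nfst2: "norm (fst v) \<le> norm v" for v :: "('a \<times> ('a \<Rightarrow>\<^sub>L real)) \<times> ('a \<times> ('a \<Rightarrow>\<^sub>L real))"
      by (metis norm_fst_le prod.collapse)
    have nsnd2: "norm (snd v) \<le> norm v" for v :: "('a \<times> ('a \<Rightarrow>\<^sub>L real)) \<times> ('a \<times> ('a \<Rightarrow>\<^sub>L real))"
      by (metis norm_snd_le prod.collapse)
    have linb: "\<bar>lin v\<bar> \<le> norm v * (2 * norm y + norm ys)" for v
    proof -
      have bl: "\<bar>blinfun_apply F x\<bar> \<le> B * norm x" if "norm F \<le> B" for F :: "'a \<Rightarrow>\<^sub>L real" and x B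
      proof -
        have "\<bar>blinfun_apply F x\<bar> \<le> norm F * norm x" using norm_blinfun[of F x] by simp
        also have "\<dots> \<le> B * norm x" using that by (simp add: mult_right_mono)
        finally show ?thesis .
      qed
      have a1: "\<bar>blinfun_apply (snd (fst v)) y\<bar> \<le> norm v * norm y"
        by (rule bl) (use nsnd[of "fst v"] nfst2[of v] in linarith)
      have a2: "\<bar>blinfun_apply (snd (snd v)) y\<bar> \<le> norm v * norm y"
        by (rule bl) (use nsnd[of "snd v"] nsnd2[of v] in linarith)
      have a3: "\<bar>blinfun_apply ys (fst (snd v))\<bar> \<le> norm ys * norm v"
        using norm_blinfun[of ys "fst (snd v)"] nfst[of "snd v"] nsnd2[of v]
        by (smt (verit) mult_left_mono norm_ge_zero real_norm_def)
      show ?thesis using a1 a2 a3 unfolding lin_def by (simp add: algebra_simps)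
    qed
    have P5: "psi (w0 + d) \<le> C" if "d \<in> D" for d
    proof -
      have "norm (w0 + d) \<le> norm w0 + 1" using Dn[OF that] norm_triangle_ineq[of w0 d] by linarith
      then have "norm (w0 + d) * (2 * norm y + norm ys) \<le> (norm w0 + 1) * (2 * norm y + norm ys)"
        by (intro mult_right_mono) auto
      then have "- lin (w0 + d) \<le> (norm w0 + 1) * (2 * norm y + norm ys)" using linb[of "w0 + d"] by linarith
      moreover have "real_of_ereal (f (fst (w0+d))) \<le> rf0 + 1" "real_of_ereal (g (snd (w0+d))) \<le> rg0 + 1"
        using that by (simp_all add: Dalt)
      ultimately show ?thesis unfolding psi_def C_def by linarith
    qed
    define C' where "C' = max C 0"
    define \<rho> where "\<rho> = r / 2"
    have rho: "\<rho> > 0" "\<rho> < r" using r by (auto simp: \<rho>_def)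
    define K where "K = C' / \<rho>"
    have K0: "K \<ge> 0" using rho by (simp add: K_def C'_def)
    have P6: "psi w \<ge> - K * norm (L w)" if wW: "w \<in> W" for w
    proof (cases "L w = 0")
      case True then show ?thesis using P1[OF wW] by simp
    next
      case False
      define z where "z = L w"
      define a where "a = norm z"
      have apos: "a > 0" using False by (simp add: a_def z_def)
      define v where "v = (- (\<rho> / a)) *\<^sub>R z"
      have vY: "v \<in> Y" unfolding v_def z_def by (rule subspace_scale[OF Ysub LWY[OF wW]])
      have vn: "norm v = \<rho>" using apos rho by (simp add: v_def a_def)
      then obtain d where dD: "d \<in> D" and vd: "v = L d" using r(2)[OF vY] rho by auto
      define w1 where "w1 = w0 + d"
      have w1W: "w1 \<in> W" using DW[OF dD] by (simp add: w1_def)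
      have Lw1: "L w1 = v" using vd LD[of d] by (simp add: w1_def)
      have pw1: "psi w1 \<le> C'" using P5[OF dD] by (simp add: w1_def C'_def)
      define l where "l = \<rho> / (a + \<rho>)"
      have l01: "0 \<le> l" "l \<le> 1" using apos rho by (auto simp: l_def)
      have 1: "1 - l = a / (a + \<rho>)" using apos rho by (simp add: l_def field_simps)
      have "L ((1-l) *\<^sub>R w1 + l *\<^sub>R w) = (1-l) *\<^sub>R v + l *\<^sub>R z"
        by (simp add: linear_add[OF Llin] linear_scale[OF Llin] Lw1 z_def)
      also have "\<dots> = 0" using apos rho unfolding 1 by (simp add: v_def l_def)
      finally have L0: "L ((1-l) *\<^sub>R w1 + l *\<^sub>R w) = 0" .
      have c2: "(1-l) *\<^sub>R w1 + l *\<^sub>R w \<in> W \<and> psi ((1-l) *\<^sub>R w1 + l *\<^sub>R w) \<le> (1-l) * psi w1 + l * psi w"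
        using P2[OF w1W wW l01] .
      then have "0 \<le> (1-l) * psi w1 + l * psi w" using P1[OF _ L0] by fastforce
      also have "\<dots> \<le> (1-l) * C' + l * psi w" using pw1 l01 by (simp add: mult_left_mono)
      finally have X: "0 \<le> (1-l) * C' + l * psi w" .
      have e1: "(a+\<rho>)*(1-l) = a" using 1 apos rho by simp
      have e2: "(a+\<rho>)*l = \<rho>" using apos rho by (simp add: l_def)
      have "(a+\<rho>)*((1-l) * C' + l * psi w) = ((a+\<rho>)*(1-l)) * C' + ((a+\<rho>)*l) * psi w"
        by (simp add: algebra_simps)
      then have "(a+\<rho>)*((1-l) * C' + l * psi w) = a * C' + \<rho> * psi w" using e1 e2 by simp
      moreover have "0 \<le> (a+\<rho>)*((1-l) * C' + l * psi w)" using X apos rho by simp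
      ultimately have "0 \<le> a * C' + \<rho> * psi w" by simp
      then have "- (C' / \<rho>) * a \<le> psi w" using rho by (simp add: field_simps)
      then show ?thesis by (simp add: K_def a_def z_def)
    qed

    define S where "S z = {l * psi w + K * norm (z - l *\<^sub>R L w) | l w. l \<ge> 0 \<and> w \<in> W}" for z
    define p where "p z = Inf (S z)" for z
    have Smem: "l * psi w + K * norm (z - l *\<^sub>R L w) \<in> S z" if "l \<ge> 0" "w \<in> W" for l w z
      using that unfolding S_def by blast
    have Sne: "S z \<noteq> {}" for z using Smem[OF order_refl w0W] by blast
    have Slow: "e \<ge> - K * norm z" if eS: "e \<in> S z" for e z
    proof -
      obtain l w where lw: "l \<ge> 0" "w \<in> W" "e = l * psi w + K * norm (z - l *\<^sub>R L w)"
        using eS unfolding S_def by blast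
      have A: "l * (- K * norm (L w)) \<le> l * psi w" by (rule mult_left_mono[OF P6[OF lw(2)] lw(1)])
      have n1: "norm (l *\<^sub>R L w) \<le> norm z + norm (l *\<^sub>R L w - z)" by (rule norm_triangle_sub)
      have n2: "norm (l *\<^sub>R L w - z) = norm (z - l *\<^sub>R L w)" by (rule norm_minus_commute)
      have n3: "norm (l *\<^sub>R L w) = l * norm (L w)" using lw(1) by simp
      have "l * norm (L w) - norm z \<le> norm (z - l *\<^sub>R L w)" using n1 n2 n3 by linarith
      then have B: "K * (l * norm (L w) - norm z) \<le> K * norm (z - l *\<^sub>R L w)" by (rule mult_left_mono[OF _ K0])
      have E: "l * (- K * norm (L w)) + K * (l * norm (L w) - norm z) = - K * norm z" by (simp add: algebra_simps)
      show ?thesis using A B E lw(3) by linarith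
    qed
    have bdd: "bdd_below (S z)" for z using Slow by (intro bdd_belowI[of _ "- K * norm z"]) auto
    have pup: "p z \<le> e" if "e \<in> S z" for e z unfolding p_def by (rule cInf_lower[OF that bdd])
    have plow: "p z \<ge> - K * norm z" for z unfolding p_def by (rule cInf_greatest[OF Sne]) (rule Slow)
    have pK: "p z \<le> K * norm z" for z using pup[OF Smem[OF order_refl w0W, of z]] by simp
    have pgr: "p z \<ge> c" if "\<And>e. e \<in> S z \<Longrightarrow> c \<le> e" for z c
      unfolding p_def by (rule cInf_greatest[OF Sne that])
    have sub: "p (z1 + z2) \<le> p z1 + p z2" for z1 z2
    proof -
      have key2: "p (z1 + z2) \<le> e1 + e2" if e1: "e1 \<in> S z1" and e2: "e2 \<in> S z2" for e1 e2
      proof -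
        obtain l1 w1 where 1: "l1 \<ge> 0" "w1 \<in> W" "e1 = l1 * psi w1 + K * norm (z1 - l1 *\<^sub>R L w1)"
          using e1 unfolding S_def by blast
        obtain l2 w2 where 2: "l2 \<ge> 0" "w2 \<in> W" "e2 = l2 * psi w2 + K * norm (z2 - l2 *\<^sub>R L w2)"
          using e2 unfolding S_def by blast
        show ?thesis
        proof (cases "l1 + l2 = 0")
          case True
          then have "l1 = 0" "l2 = 0" using 1 2 by auto
          then have "e1 + e2 = K * norm z1 + K * norm z2" using 1 2 by simp
          moreover have "K * norm (z1 + z2) \<le> K * norm z1 + K * norm z2"
            using K0 norm_triangle_ineq[of z1 z2] by (simp add: mult_left_mono distrib_left[symmetric])
          ultimately show ?thesis using pK[of "z1 + z2"] by linarith
        next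
          case False
          define l where "l = l1 + l2"
          have lpos: "l > 0" using False 1 2 by (simp add: l_def)
          define t where "t = l2 / l"
          have t01: "0 \<le> t" "t \<le> 1" using lpos 1 2 by (auto simp: t_def l_def)
          have lt: "l * (1 - t) = l1" "l * t = l2" using lpos by (simp_all add: t_def l_def field_simps)
          define w where "w = (1-t) *\<^sub>R w1 + t *\<^sub>R w2"
          have cw: "w \<in> W \<and> psi w \<le> (1-t) * psi w1 + t * psi w2"
            unfolding w_def by (rule P2[OF 1(2) 2(2) t01])
          have "l * psi w \<le> l * ((1-t) * psi w1 + t * psi w2)" using cw lpos by (simp add: mult_left_mono)
          also have "\<dots> = (l * (1-t)) * psi w1 + (l * t) * psi w2" by (simp add: algebra_simps)
          also have "\<dots> = l1 * psi w1 + l2 * psi w2" using lt by simp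
          finally have A: "l * psi w \<le> l1 * psi w1 + l2 * psi w2" .
          have "l *\<^sub>R L w = (l * (1-t)) *\<^sub>R L w1 + (l * t) *\<^sub>R L w2"
            by (simp add: w_def linear_add[OF Llin] linear_scale[OF Llin] scaleR_add_right)
          then have Lw: "l *\<^sub>R L w = l1 *\<^sub>R L w1 + l2 *\<^sub>R L w2" using lt by simp
          have "norm (z1 + z2 - l *\<^sub>R L w) \<le> norm (z1 - l1 *\<^sub>R L w1) + norm (z2 - l2 *\<^sub>R L w2)"
            unfolding Lw using norm_triangle_ineq[of "z1 - l1 *\<^sub>R L w1" "z2 - l2 *\<^sub>R L w2"]
            by (simp add: algebra_simps)
          then have B: "K * norm (z1 + z2 - l *\<^sub>R L w) \<le> K * norm (z1 - l1 *\<^sub>R L w1) + K * norm (z2 - l2 *\<^sub>R L w2)"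
            using K0 by (simp add: mult_left_mono distrib_left[symmetric])
          have "p (z1 + z2) \<le> l * psi w + K * norm (z1 + z2 - l *\<^sub>R L w)"
            using pup[OF Smem[of l w "z1 + z2"]] lpos cw by simp
          then show ?thesis using A B 1(3) 2(3) by linarith
        qed
      qed
      have "p (z1 + z2) - p z2 \<le> p z1"
      proof (rule pgr)
        fix e1 assume e1: "e1 \<in> S z1"
        have "p (z1 + z2) - e1 \<le> p z2" by (rule pgr) (use key2[OF e1] in force)
        then show "p (z1 + z2) - p z2 \<le> e1" by linarith
      qed
      then show ?thesis by linarith
    qed
    have hom1: "p (c *\<^sub>R z) \<le> c * p z" if c: "c > 0" for c z
    proof -
      have "p (c *\<^sub>R z) / c \<le> p z"
      proof (rule pgr)
        fix e assume "e \<in> S z"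
        then obtain l w where lw: "l \<ge> 0" "w \<in> W" "e = l * psi w + K * norm (z - l *\<^sub>R L w)"
          unfolding S_def by blast
        have "(c * l) * psi w + K * norm (c *\<^sub>R z - (c * l) *\<^sub>R L w) = c * e"
        proof -
          have eq: "c *\<^sub>R z - (c * l) *\<^sub>R L w = c *\<^sub>R (z - l *\<^sub>R L w)" by (simp add: algebra_simps)
          have n: "norm (c *\<^sub>R z - (c * l) *\<^sub>R L w) = c * norm (z - l *\<^sub>R L w)" unfolding eq using c by simp
          show ?thesis using lw(3) n by (simp add: algebra_simps)
        qed
        then have "p (c *\<^sub>R z) \<le> c * e" using pup[OF Smem[of "c*l" w "c *\<^sub>R z"]] c lw by simp
        then show "p (c *\<^sub>R z) / c \<le> e" using c by (simp add: field_simps)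
      qed
      then show ?thesis using c by (simp add: field_simps)
    qed
    have hom: "p (c *\<^sub>R z) = c * p z" if "c \<ge> 0" for c z
    proof (cases "c = 0")
      case True
      then show ?thesis using pK[of 0] plow[of 0] by simp
    next
      case False
      then have c: "c > 0" using that by simp
      have "p z = p ((1/c) *\<^sub>R (c *\<^sub>R z))" using c by simp
      also have "\<dots> \<le> (1/c) * p (c *\<^sub>R z)" using c by (intro hom1) simp
      finally have "c * p z \<le> p (c *\<^sub>R z)" using c by (simp add: field_simps)
      then show ?thesis using hom1[OF c, of z] by simp
    qed
    obtain u where ulin: "linear u" and up: "\<And>x. u x \<le> p x"
      using hahn_banach_sublinear[of p] sub hom by blast
    have ubd: "norm (u x) \<le> norm x * K" for x
    proof -
      have "u x \<le> K * norm x" using up[of x] pK[of x] by simp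
      moreover have "- u x \<le> K * norm x" using up[of "-x"] pK[of "-x"] linear_neg[OF ulin, of x] by simp
      ultimately show ?thesis by (simp add: abs_le_iff mult.commute)
    qed
    have ubl: "bounded_linear u"
      using ulin ubd by (intro bounded_linear_intro[where K=K]) (simp_all add: linear_add linear_scale)
    define ub where "ub = Blinfun u"
    have ubu: "blinfun_apply ub = u" unfolding ub_def using ubl by (simp add: bounded_linear_Blinfun_apply)
    have uL: "u (L w) \<le> psi w" if "w \<in> W" for w
      using up[of "L w"] pup[OF Smem[of 1 w "L w"]] that by simp

    have AB: "blinfun_apply ub (fst p) + blinfun_apply (snd p) y - real_of_ereal (f p)
        + (blinfun_apply ys (fst q) - blinfun_apply ub (fst q) + blinfun_apply (snd q) y - real_of_ereal (g q)) \<le> M"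
      if "f p \<noteq> \<infinity>" "g q \<noteq> \<infinity>" for p q
    proof -
      have "(p,q) \<in> W" using that by (simp add: W_def)
      from uL[OF this] show ?thesis by (simp add: ubu psi_def lin_def L_def linear_diff[OF ulin])
    qed
    define Bv where "Bv q = blinfun_apply ys (fst q) - blinfun_apply ub (fst q) + blinfun_apply (snd q) y - real_of_ereal (g q)" for q
    have S1: "fconj f (y, ub) \<le> ereal (M - Bv q)" if gq': "g q \<noteq> \<infinity>" for q
      unfolding fconj_def
    proof (rule SUP_least)
      fix p show "ereal (bpair p (y, ub)) - f p \<le> ereal (M - Bv q)"
      proof (cases "f p = \<infinity>")
        case True then show ?thesis by simp
      next
        case False
        then obtain a where a: "f p = ereal a" using fnm[of p] by (cases "f p") auto
        show ?thesis using AB[OF False gq'] a by (simp add: bpair_def Bv_def)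
      qed
    qed
    have Flow: "fconj f (y, ub) \<ge> ereal (bpair (a0, s0) (y, ub)) - f (a0, s0)"
      unfolding fconj_def by (rule SUP_upper) simp
    obtain Fr where Fr: "fconj f (y, ub) = ereal Fr"
    proof -
      have "fconj f (y, ub) \<noteq> -\<infinity>" using Flow f0 fnm[of "(a0,s0)"] by (cases "f (a0,s0)") auto
      moreover have "fconj f (y, ub) \<noteq> \<infinity>" using S1[OF g0] by auto
      ultimately show ?thesis using that by (cases "fconj f (y, ub)") auto
    qed
    have S3: "fconj g (y, ys - ub) \<le> ereal (M - Fr)"
      unfolding fconj_def
    proof (rule SUP_least)
      fix q show "ereal (bpair q (y, ys - ub)) - g q \<le> ereal (M - Fr)"
      proof (cases "g q = \<infinity>")
        case True then show ?thesis by simp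
      next
        case False
        then obtain b where b: "g q = ereal b" using gnm[of q] by (cases "g q") auto
        have "Fr \<le> M - Bv q" using S1[OF False] Fr by simp
        then show ?thesis using b by (simp add: bpair_def Bv_def blinfun.diff_left)
      qed
    qed
    have "fconj f (y, ub) + fconj g (y, ys - ub) \<le> ereal Fr + ereal (M - Fr)"
      unfolding Fr by (rule add_left_mono[OF S3])
    also have "\<dots> = ereal M" by simp
    finally show ?thesis using M by (intro exI[of _ ub]) simp
  qed
qed

lemma conj_easy:
  fixes f g h :: "'a::banach \<times> ('a \<Rightarrow>\<^sub>L real) \<Rightarrow> ereal"
  assumes fnm: "\<And>p. f p \<noteq> -\<infinity>" and gnm: "\<And>p. g p \<noteq> -\<infinity>"
    and ff: "\<And>p. fconj f p \<noteq> -\<infinity>" and gg: "\<And>p. fconj g p \<noteq> -\<infinity>"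
    and hdef: "\<And>x xs. h (x, xs) = (INF st \<in> {(s, t). s + t = xs}. f (x, fst st) + g (x, snd st))"
  shows "fconj h (y, u + v) \<le> fconj f (y, u) + fconj g (y, v)"
proof (cases "fconj f (y, u) = \<infinity> \<or> fconj g (y, v) = \<infinity>")
  case True
  then show ?thesis using ff[of "(y,u)"] gg[of "(y,v)"] by auto
next
  case False
  then obtain F G where F: "fconj f (y, u) = ereal F" and G: "fconj g (y, v) = ereal G"
    using ff[of "(y,u)"] gg[of "(y,v)"]
    by (cases "fconj f (y, u)"; cases "fconj g (y, v)") auto
  show ?thesis unfolding fconj_def[of h]
  proof (rule SUP_least)
    fix p :: "'a \<times> ('a \<Rightarrow>\<^sub>L real)"
    obtain x xs where p: "p = (x, xs)" by (cases p)
    define c where "c = bpair p (y, u + v)"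
    have "ereal (c - (F + G)) \<le> h (x, xs)"
      unfolding hdef
    proof (rule INF_greatest)
      fix st assume st: "st \<in> {(s, t). s + t = xs}"
      obtain s t where stv: "st = (s,t)" "s + t = xs" using st by (cases st) auto
      show "ereal (c - (F + G)) \<le> f (x, fst st) + g (x, snd st)"
      proof (cases "f (x, s) = \<infinity> \<or> g (x, t) = \<infinity>")
        case True then show ?thesis using fnm[of "(x,s)"] gnm[of "(x,t)"] stv by auto
      next
        case False
        then obtain a b where a: "f (x,s) = ereal a" and b: "g (x,t) = ereal b"
          using fnm[of "(x,s)"] gnm[of "(x,t)"] by (cases "f (x,s)"; cases "g (x,t)") auto
        have "ereal (bpair (x,s) (y,u)) - f (x,s) \<le> fconj f (y,u)"
          unfolding fconj_def by (rule SUP_upper) simp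
        then have 1: "blinfun_apply u x + blinfun_apply s y - a \<le> F" using a F by (simp add: bpair_def)
        have "ereal (bpair (x,t) (y,v)) - g (x,t) \<le> fconj g (y,v)"
          unfolding fconj_def by (rule SUP_upper) simp
        then have 2: "blinfun_apply v x + blinfun_apply t y - b \<le> G" using b G by (simp add: bpair_def)
        have "c = blinfun_apply u x + blinfun_apply v x + blinfun_apply s y + blinfun_apply t y"
          using stv(2)[symmetric] by (simp add: c_def p bpair_def blinfun.add_left)
        then show ?thesis using 1 2 a b stv by simp
      qed
    qed
    then show "ereal (bpair p (y, u + v)) - h p \<le> fconj f (y, u) + fconj g (y, v)"
      unfolding F G p[symmetric] c_def[symmetric] by (cases "h p") auto
  qed
qed

lemma Pq_conj_le:
  fixes k :: "'a::banach \<times> ('a \<Rightarrow>\<^sub>L real) \<Rightarrow> ereal"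
  assumes cv: "convex_fun k" and kq: "\<And>p. k p \<ge> ereal (qform p)" and kp: "k p = ereal (qform p)"
  shows "fconj k p \<le> ereal (qform p)"
  unfolding fconj_def
proof (rule SUP_least)
  fix r
  show "ereal (bpair r p) - k r \<le> ereal (qform p)"
  proof (cases "k r = \<infinity>")
    case True then show ?thesis by simp
  next
    case False
    have knm: "k z \<noteq> -\<infinity>" for z using kq[of z] by auto
    obtain b where b: "k r = ereal b" using False knm[of r] by (cases "k r") auto
    define d where "d = r - p"
    define B where "B = bpair p d"
    define Q where "Q = qform d"
    have ineq: "qform p + B + l * Q \<le> b" if l: "0 < l" "l < 1" for l
    proof -
      have "k ((1-l) *\<^sub>R p + l *\<^sub>R r) \<le> ereal (1-l) * k p + ereal l * k r"
        using cv l unfolding convex_fun_def by blast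
      also have "\<dots> = ereal ((1-l) * qform p + l * b)" using kp b by simp
      finally have 1: "ereal (qform ((1-l) *\<^sub>R p + l *\<^sub>R r)) \<le> ereal ((1-l) * qform p + l * b)"
        using kq order_trans by blast
      have eq: "(1-l) *\<^sub>R p + l *\<^sub>R r = p + l *\<^sub>R d" by (simp add: d_def algebra_simps)
      have "qform (p + l *\<^sub>R d) = qform p + l * B + l * l * Q"
        by (simp add: qform_def bpair_def B_def Q_def blinfun.add_left blinfun.add_right
                      blinfun.scaleR_left blinfun.scaleR_right algebra_simps)
      then have "qform p + l * B + l * l * Q \<le> (1-l) * qform p + l * b" using 1 eq by simp
      then have "l * (qform p + B + l * Q) \<le> l * b" by (simp add: algebra_simps)
      then show ?thesis using l by simp
    qed
    have lim: "qform p + B \<le> b"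
    proof (rule ccontr)
      assume "\<not> ?thesis"
      then have gap: "qform p + B - b > 0" by simp
      define l where "l = min (1/2) ((qform p + B - b) / (2 * (\<bar>Q\<bar> + 1)))"
      have l: "0 < l" "l < 1" using gap by (auto simp: l_def)
      have "l * \<bar>Q\<bar> \<le> ((qform p + B - b) / (2 * (\<bar>Q\<bar> + 1))) * (\<bar>Q\<bar> + 1)"
        using l by (intro mult_mono) (auto simp: l_def)
      also have "\<dots> = (qform p + B - b) / 2" by (simp add: field_simps)
      finally have "l * \<bar>Q\<bar> \<le> (qform p + B - b) / 2" .
      moreover have "(qform p + B - b) / 2 < qform p + B - b" using gap by simp
      ultimately have "l * \<bar>Q\<bar> < qform p + B - b" by linarith
      moreover have "- (l * \<bar>Q\<bar>) \<le> l * Q"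
      proof -
        have "- \<bar>Q\<bar> \<le> Q" by simp
        then have "l * (- \<bar>Q\<bar>) \<le> l * Q" using l by (intro mult_left_mono) auto
        then show ?thesis by simp
      qed
      ultimately show False using ineq[OF l] by linarith
    qed
    have "bpair r p = bpair p r" by (simp add: bpair_def)
    moreover have "bpair p r = B + 2 * qform p"
      by (simp add: B_def d_def bpair_def qform_def blinfun.diff_left blinfun.diff_right)
    ultimately have "bpair r p - b \<le> qform p" using lim by simp
    then show ?thesis using b by simp
  qed
qed

lemma h_convex:
  fixes f g h :: "'a::banach \<times> ('a \<Rightarrow>\<^sub>L real) \<Rightarrow> ereal"
  assumes fcv: "convex_fun f" and gcv: "convex_fun g"
    and fnm: "\<And>p. f p \<noteq> -\<infinity>" and gnm: "\<And>p. g p \<noteq> -\<infinity>" and hnm: "\<And>p. h p \<noteq> -\<infinity>"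
    and hdef: "\<And>x xs. h (x, xs) = (INF st \<in> {(s, t). s + t = xs}. f (x, fst st) + g (x, snd st))"
  shows "convex_fun h"
  unfolding convex_fun_def
proof (intro allI impI)
  fix p1 p2 and l :: real assume l0: "0 < l" and l1: "l < 1"
  show "h ((1 - l) *\<^sub>R p1 + l *\<^sub>R p2) \<le> ereal (1 - l) * h p1 + ereal l * h p2"
  proof (cases "h p1 = \<infinity> \<or> h p2 = \<infinity>")
    case True
    then have "ereal (1 - l) * h p1 + ereal l * h p2 = \<infinity>"
      using l0 l1 hnm[of p1] hnm[of p2] by (cases "h p1"; cases "h p2") auto
    then show ?thesis by (metis top_ereal_def top_greatest)
  next
    case False
    then obtain H1 H2 where H1: "h p1 = ereal H1" and H2: "h p2 = ereal H2"
      using hnm[of p1] hnm[of p2] by (cases "h p1"; cases "h p2") auto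
    obtain x1 xs1 where p1: "p1 = (x1, xs1)" by (cases p1)
    obtain x2 xs2 where p2: "p2 = (x2, xs2)" by (cases p2)
    have Heps: "h ((1 - l) *\<^sub>R p1 + l *\<^sub>R p2) \<le> ereal ((1-l) * H1 + l * H2) + ereal e" if e: "e > 0" for e
    proof -
      have "h (x1, xs1) < ereal (H1 + e)" using H1 p1 e by simp
      then obtain s1 t1 where st1: "s1 + t1 = xs1" "f (x1, s1) + g (x1, t1) < ereal (H1 + e)"
        unfolding hdef INF_less_iff by auto
      have "h (x2, xs2) < ereal (H2 + e)" using H2 p2 e by simp
      then obtain s2 t2 where st2: "s2 + t2 = xs2" "f (x2, s2) + g (x2, t2) < ereal (H2 + e)"
        unfolding hdef INF_less_iff by auto
      obtain a1 b1 where ab1: "f (x1, s1) = ereal a1" "g (x1, t1) = ereal b1"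
        using st1(2) fnm[of "(x1,s1)"] gnm[of "(x1,t1)"] by (cases "f (x1, s1)"; cases "g (x1, t1)") auto
      obtain a2 b2 where ab2: "f (x2, s2) = ereal a2" "g (x2, t2) = ereal b2"
        using st2(2) fnm[of "(x2,s2)"] gnm[of "(x2,t2)"] by (cases "f (x2, s2)"; cases "g (x2, t2)") auto
      have s1: "a1 + b1 < H1 + e" using st1(2) ab1 by simp
      have s2: "a2 + b2 < H2 + e" using st2(2) ab2 by simp
      have cf: "f ((1-l) *\<^sub>R (x1,s1) + l *\<^sub>R (x2,s2)) \<noteq> \<infinity> \<and>
         real_of_ereal (f ((1-l) *\<^sub>R (x1,s1) + l *\<^sub>R (x2,s2))) \<le> (1-l) * a1 + l * a2"
      proof -
        have "f ((1-l) *\<^sub>R (x1,s1) + l *\<^sub>R (x2,s2)) \<noteq> \<infinity> \<and>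
         real_of_ereal (f ((1-l) *\<^sub>R (x1,s1) + l *\<^sub>R (x2,s2))) \<le> (1-l) * real_of_ereal (f (x1,s1)) + l * real_of_ereal (f (x2,s2))"
          by (rule conv_real[OF fcv fnm]) (use ab1 ab2 l0 l1 in auto)
        then show ?thesis unfolding ab1 ab2 real_of_ereal.simps(1) .
      qed
      have cg: "g ((1-l) *\<^sub>R (x1,t1) + l *\<^sub>R (x2,t2)) \<noteq> \<infinity> \<and>
         real_of_ereal (g ((1-l) *\<^sub>R (x1,t1) + l *\<^sub>R (x2,t2))) \<le> (1-l) * b1 + l * b2"
      proof -
        have "g ((1-l) *\<^sub>R (x1,t1) + l *\<^sub>R (x2,t2)) \<noteq> \<infinity> \<and>
         real_of_ereal (g ((1-l) *\<^sub>R (x1,t1) + l *\<^sub>R (x2,t2))) \<le> (1-l) * real_of_ereal (g (x1,t1)) + l * real_of_ereal (g (x2,t2))"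
          by (rule conv_real[OF gcv gnm]) (use ab1 ab2 l0 l1 in auto)
        then show ?thesis unfolding ab1 ab2 real_of_ereal.simps(1) .
      qed
      define x where "x = (1-l) *\<^sub>R x1 + l *\<^sub>R x2"
      define s where "s = (1-l) *\<^sub>R s1 + l *\<^sub>R s2"
      define t where "t = (1-l) *\<^sub>R t1 + l *\<^sub>R t2"
      have comb: "(1 - l) *\<^sub>R p1 + l *\<^sub>R p2 = (x, s + t)"
        unfolding p1 p2 x_def s_def t_def st1(1)[symmetric] st2(1)[symmetric]
        by (simp add: scaleR_add_right)
      have fx: "f (x, s) \<le> ereal ((1-l) * a1 + l * a2)"
        using cf fnm[of "(x,s)"] by (simp add: x_def s_def le_ereal_iff)
      have gx: "g (x, t) \<le> ereal ((1-l) * b1 + l * b2)"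
        using cg gnm[of "(x,t)"] by (simp add: x_def t_def le_ereal_iff)
      have "h ((1 - l) *\<^sub>R p1 + l *\<^sub>R p2) \<le> f (x, s) + g (x, t)"
        unfolding comb hdef by (rule INF_lower2[of "(s,t)"]) auto
      also have "\<dots> \<le> ereal ((1-l) * a1 + l * a2) + ereal ((1-l) * b1 + l * b2)"
        by (rule add_mono[OF fx gx])
      also have "\<dots> \<le> ereal ((1-l) * H1 + l * H2) + ereal e"
      proof -
        have "(1-l) * (a1 + b1) \<le> (1-l) * (H1 + e)" using s1 l1 by (intro mult_left_mono) auto
        moreover have "l * (a2 + b2) \<le> l * (H2 + e)" using s2 l0 by (intro mult_left_mono) auto
        ultimately have "(1-l) * a1 + l * a2 + ((1-l) * b1 + l * b2) \<le> (1-l) * H1 + l * H2 + e"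
          by (simp add: algebra_simps)
        then show ?thesis by (simp only: plus_ereal.simps ereal_less_eq)
      qed
      finally show ?thesis .
    qed
    have "h ((1 - l) *\<^sub>R p1 + l *\<^sub>R p2) \<le> ereal ((1-l) * H1 + l * H2)"
      by (rule ereal_le_epsilon2) (rule Heps)
    then show ?thesis using H1 H2 by simp
  qed
qed

theorem theorem5p3:
  fixes f g :: "'a::banach \<times> ('a \<Rightarrow>\<^sub>L real) \<Rightarrow> ereal"
    and h :: "'a \<times> ('a \<Rightarrow>\<^sub>L real) \<Rightarrow> ereal"
  assumes "\<exists>x::'a. x \<noteq> 0"
    and "reflexive_space TYPE('a)"
    and "proper_fun f" "convex_fun f" "lsc_fun f" "BC_fun f"
    and "proper_fun g" "convex_fun g" "lsc_fun g" "BC_fun g"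
    and "subspace (\<Union>c\<in>{0::real<..}. (\<lambda>v. c *\<^sub>R v) `
            {a - b | a b. a \<in> fst ` fdom f \<and> b \<in> fst ` fdom g})"
    and "closed (\<Union>c\<in>{0::real<..}. (\<lambda>v. c *\<^sub>R v) `
            {a - b | a b. a \<in> fst ` fdom f \<and> b \<in> fst ` fdom g})"
    and "\<And>x xs. h (x, xs) = (INF st \<in> {(s, t). s + t = xs}. f (x, fst st) + g (x, snd st))"
  shows "BC_fun h \<and>
    Pq (fconj h) = {(x, s + t) | x s t. (x, s) \<in> Pq (fconj f) \<and> (x, t) \<in> Pq (fconj g)} \<and>
    Pq h = {(x, s + t) | x s t. (x, s) \<in> Pq f \<and> (x, t) \<in> Pq g}"
proof -
  note fcv = assms(4) and flsc = assms(5) and fBC = assms(6)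
  note gcv = assms(8) and glsc = assms(9) and gBC = assms(10)
  note Ysub = assms(11) and Ycl = assms(12) and hdef = assms(13)
  have fq: "f p \<ge> ereal (qform p)" and ffc: "fconj f p \<ge> f p" for p
    using fBC unfolding BC_fun_def by blast+
  have gq: "g p \<ge> ereal (qform p)" and ggc: "fconj g p \<ge> g p" for p
    using gBC unfolding BC_fun_def by blast+
  have fnm: "f p \<noteq> -\<infinity>" for p using fq[of p] by auto
  have gnm: "g p \<noteq> -\<infinity>" for p using gq[of p] by auto
  have ffnm: "fconj f p \<noteq> -\<infinity>" for p using ffc[of p] fnm[of p] by auto
  have ggnm: "fconj g p \<noteq> -\<infinity>" for p using ggc[of p] gnm[of p] by auto
  have hle: "h (x, s + t) \<le> f (x, s) + g (x, t)" for x s t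
    unfolding hdef by (rule INF_lower2[of "(s,t)"]) auto
  have hq: "h p \<ge> ereal (qform p)" for p
  proof -
    obtain x xs where p: "p = (x, xs)" by (cases p)
    have "ereal (qform (x, xs)) \<le> h (x, xs)"
      unfolding hdef
    proof (rule INF_greatest)
      fix st assume "st \<in> {(s, t). s + t = xs}"
      then obtain s t where st: "st = (s, t)" "s + t = xs" by auto
      have "ereal (qform (x, s)) + ereal (qform (x, t)) \<le> f (x, s) + g (x, t)"
        by (rule add_mono[OF fq gq])
      moreover have "ereal (qform (x, s)) + ereal (qform (x, t)) = ereal (qform (x, xs))"
        using st(2)[symmetric] by (simp add: qform_def blinfun.add_left)
      ultimately show "ereal (qform (x, xs)) \<le> f (x, fst st) + g (x, snd st)" using st by simp
    qed
    then show ?thesis using p by simp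
  qed
  have hnm: "h p \<noteq> -\<infinity>" for p using hq[of p] by auto
  have decomp: "\<exists>u. fconj h (y, ys) = fconj f (y, u) + fconj g (y, ys - u)" for y ys
  proof -
    obtain u where u: "fconj f (y, u) + fconj g (y, ys - u) \<le> fconj h (y, ys)"
      using key[OF fcv gcv flsc glsc fq gq Ysub Ycl refl hdef] by blast
    have "fconj h (y, u + (ys - u)) \<le> fconj f (y, u) + fconj g (y, ys - u)"
      by (rule conj_easy[OF fnm gnm ffnm ggnm hdef])
    then have "fconj h (y, ys) \<le> fconj f (y, u) + fconj g (y, ys - u)" by simp
    then show ?thesis using u by (intro exI[of _ u]) (rule antisym)
  qed
  have hhc: "fconj h p \<ge> h p" for p
  proof -
    obtain y ys where p: "p = (y, ys)" by (cases p)
    obtain u where u: "fconj h (y, ys) = fconj f (y, u) + fconj g (y, ys - u)" using decomp by blast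
    have "h (y, ys) \<le> f (y, u) + g (y, ys - u)" using hle[of y u "ys - u"] by simp
    also have "\<dots> \<le> fconj f (y, u) + fconj g (y, ys - u)" by (rule add_mono[OF ffc ggc])
    finally show ?thesis using u p by simp
  qed
  have hcv: "convex_fun h" by (rule h_convex[OF fcv gcv fnm gnm hnm hdef])
  have hproper: "proper_fun h"
  proof -
    have "0 \<in> (\<Union>c\<in>{0::real<..}. (\<lambda>v. c *\<^sub>R v) ` {a - b | a b. a \<in> fst ` fdom f \<and> b \<in> fst ` fdom g})"
      using Ysub by (rule subspace_0)
    then obtain c a b where cab: "c > 0" "a \<in> fst ` fdom f" "b \<in> fst ` fdom g" "0 = c *\<^sub>R (a - b)" by blast
    then have ab: "a = b" by simp
    obtain s where s: "f (a, s) \<noteq> \<infinity>" using cab(2) by (auto simp: fdom_def)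
    obtain t where t: "g (a, t) \<noteq> \<infinity>" using cab(3) ab by (auto simp: fdom_def)
    have "h (a, s + t) \<noteq> \<infinity>"
    proof
      assume "h (a, s + t) = \<infinity>"
      then have "f (a, s) + g (a, t) = \<infinity>" using hle[of a s t] by (simp add: top_unique[symmetric, unfolded top_ereal_def])
      then show False using s t fnm[of "(a,s)"] gnm[of "(a,t)"] by (cases "f (a, s)"; cases "g (a, t)") auto
    qed
    then show ?thesis unfolding proper_fun_def using hnm by blast
  qed
  have BCh: "BC_fun h" unfolding BC_fun_def using hproper hcv hhc hq by blast
  have P1: "Pq (fconj h) = {(x, s + t) | x s t. (x, s) \<in> Pq (fconj f) \<and> (x, t) \<in> Pq (fconj g)}"
  proof (intro set_eqI iffI)
    fix p assume "p \<in> Pq (fconj h)"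
    then have pq: "fconj h p = ereal (qform p)" by (simp add: Pq_def)
    obtain y ys where p: "p = (y, ys)" by (cases p)
    obtain u where u: "fconj h (y, ys) = fconj f (y, u) + fconj g (y, ys - u)" using decomp by blast
    have F1: "fconj f (y, u) \<ge> ereal (qform (y, u))" using ffc fq order_trans by blast
    have G1: "fconj g (y, ys - u) \<ge> ereal (qform (y, ys - u))" using ggc gq order_trans by blast
    have sum: "fconj f (y, u) + fconj g (y, ys - u) = ereal (qform (y, ys))" using u pq p by simp
    obtain Fr where Fr: "fconj f (y, u) = ereal Fr"
      using sum ffnm[of "(y,u)"] ggnm[of "(y, ys - u)"]
      by (cases "fconj f (y, u)"; cases "fconj g (y, ys - u)") auto
    obtain Gr where Gr: "fconj g (y, ys - u) = ereal Gr"
      using sum ffnm[of "(y,u)"] ggnm[of "(y, ys - u)"]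
      by (cases "fconj f (y, u)"; cases "fconj g (y, ys - u)") auto
    have q3: "qform (y, ys) = qform (y, u) + qform (y, ys - u)" by (simp add: qform_def blinfun.diff_left)
    have "Fr \<ge> qform (y, u)" "Gr \<ge> qform (y, ys - u)" "Fr + Gr = qform (y, ys)"
      using F1 G1 sum Fr Gr by simp_all
    then have "Fr = qform (y, u)" "Gr = qform (y, ys - u)" using q3 by linarith+
    then have "(y, u) \<in> Pq (fconj f)" "(y, ys - u) \<in> Pq (fconj g)" using Fr Gr by (simp_all add: Pq_def)
    moreover have "p = (y, u + (ys - u))" using p by simp
    ultimately show "p \<in> {(x, s + t) | x s t. (x, s) \<in> Pq (fconj f) \<and> (x, t) \<in> Pq (fconj g)}" by blast
  next
    fix p assume "p \<in> {(x, s + t) | x s t. (x, s) \<in> Pq (fconj f) \<and> (x, t) \<in> Pq (fconj g)}"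
    then obtain x s t where p: "p = (x, s + t)" and fs: "fconj f (x, s) = ereal (qform (x, s))"
      and gt: "fconj g (x, t) = ereal (qform (x, t))" by (auto simp: Pq_def)
    have "fconj h (x, s + t) \<le> fconj f (x, s) + fconj g (x, t)"
      by (rule conj_easy[OF fnm gnm ffnm ggnm hdef])
    also have "\<dots> = ereal (qform (x, s + t))" using fs gt by (simp add: qform_def blinfun.add_left)
    finally have "fconj h p \<le> ereal (qform p)" using p by simp
    moreover have "fconj h p \<ge> ereal (qform p)" using hhc hq order_trans by blast
    ultimately show "p \<in> Pq (fconj h)" by (simp add: Pq_def)
  qed
  have P2: "Pq h = {(x, s + t) | x s t. (x, s) \<in> Pq f \<and> (x, t) \<in> Pq g}"
  proof (intro set_eqI iffI)
    fix p assume "p \<in> Pq h"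
    then have hp: "h p = ereal (qform p)" by (simp add: Pq_def)
    have "fconj h p \<le> ereal (qform p)" by (rule Pq_conj_le[OF hcv hq hp])
    moreover have "fconj h p \<ge> ereal (qform p)" using hhc[of p] hp by simp
    ultimately have "p \<in> Pq (fconj h)" by (simp add: Pq_def)
    then obtain x s t where p: "p = (x, s + t)" and fs: "fconj f (x, s) = ereal (qform (x, s))"
      and gt: "fconj g (x, t) = ereal (qform (x, t))" unfolding P1 by (auto simp: Pq_def)
    have "f (x, s) = ereal (qform (x, s))" using ffc[of "(x,s)"] fq[of "(x,s)"] fs by (simp add: antisym)
    moreover have "g (x, t) = ereal (qform (x, t))" using ggc[of "(x,t)"] gq[of "(x,t)"] gt by (simp add: antisym)
    ultimately show "p \<in> {(x, s + t) | x s t. (x, s) \<in> Pq f \<and> (x, t) \<in> Pq g}" using p by (auto simp: Pq_def)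
  next
    fix p assume "p \<in> {(x, s + t) | x s t. (x, s) \<in> Pq f \<and> (x, t) \<in> Pq g}"
    then obtain x s t where p: "p = (x, s + t)" and fs: "f (x, s) = ereal (qform (x, s))"
      and gt: "g (x, t) = ereal (qform (x, t))" by (auto simp: Pq_def)
    have "h (x, s + t) \<le> f (x, s) + g (x, t)" by (rule hle)
    also have "\<dots> = ereal (qform (x, s + t))" using fs gt by (simp add: qform_def blinfun.add_left)
    finally have "h p \<le> ereal (qform p)" using p by simp
    then show "p \<in> Pq h" using hq[of p] by (simp add: Pq_def antisym)
  qed
  show ?thesis using BCh P1 P2 by blast
qed

end
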